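(* Let $n_1(t,x)$ and $n_2(t,x)$, $t\ge 0$, $x>0$, be nonnegative solutions to Smoluchowski's coagulation equation $$\partial_t n(t,x)=\frac12\int_0^x K(x-y,y)n(t,x-y)n(t,y)\,dy-\int_0^\infty K(x,y)n(t,x)n(t,y)\,dy$$ with additive kernel $K(x,y)=x+y$, such that for $\ell=1,2$, $n_\ell(0,\cdot)\in L^1(\mathbb{R}^+)$ and $$\int_0^\infty x\,n_\ell(0,x)\,dx=\int_0^\infty x^2 n_\ell(0,x)\,dx=1,\qquad \int_0^\infty x^3 n_\ell(0,x)\,dx<\infty.$$ For $\ell=1,2$ let $g_\ell(\tau,z)=e^{2\tau}n_\ell(\tfrac12\tau,e^\tau z)$ for $\tau\ge0$, $z>0$. Then for each $\kappa\in(2,3)$, $$\|g_1(\tau,\cdot)-g_2(\tau,\cdot)\|_{\mathsf{add},\kappa}\le e^{-\frac12(\kappa-2)\tau}\|g_1(0,\cdot)-g_2(0,\cdot)\|_{\mathsf{add},\kappa}\qquad\forall\tau\ge0.$$ In particular, this shows exponential convergence, with respect to $\|\cdot\|_{\mathsf{add},\kappa}$, of such rescaled solutions towards the unique self-similar profile $G_{\mathsf{add}}(x)=\frac{1}{\sqrt{2\pi}}x^{-3/2}e^{-x/2}$.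
   Context: For a function $g$ on $(0,\infty)$ and $\kappa\in\mathbb{R}$, $\|g\|_{\mathsf{add},\kappa}=\sup_{\eta>0}\eta^{-\kappa}\left|\int_0^\infty (1-e^{-\eta x})g(x)\,dx\right|$. $\mathbb{R}^+=(0,\infty)$. Solutions are mass-conserving: $\int_0^\infty x n_\ell(t,x)\,dx$ is constant in $t$. *)

theory Defs
  imports "HOL-Analysis.Analysis"
begin

definition coag_test_fun :: "(real \<Rightarrow> real) \<Rightarrow> bool" where
  "coag_test_fun \<phi> \<longleftrightarrow> continuous_on UNIV \<phi> \<and>
     (\<exists>a b. 0 < a \<and> (\<forall>x. x \<notin> {a..b} \<longrightarrow> \<phi> x = 0))"

definition coag_op :: "(real \<Rightarrow> real \<Rightarrow> real) \<Rightarrow> (real \<Rightarrow> real \<Rightarrow> real) \<Rightarrow> real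
    \<Rightarrow> (real \<Rightarrow> real) \<Rightarrow> real" where
  "coag_op K n s \<phi> = (1/2) * (LINT x:{0<..}|lborel. LINT y:{0<..}|lborel.
       K x y * (\<phi> (x + y) - \<phi> x - \<phi> y) * n s x * n s y)"

definition smol_solution :: "(real \<Rightarrow> real \<Rightarrow> real) \<Rightarrow> (real \<Rightarrow> real \<Rightarrow> real) \<Rightarrow> bool" where
  "smol_solution K n \<longleftrightarrow>
     (\<forall>t\<ge>0. \<forall>x>0. 0 \<le> n t x) \<and>
     (\<forall>t\<ge>0. set_integrable lborel {0<..} (n t) \<and>
              set_integrable lborel {0<..} (\<lambda>x. x * n t x)) \<and>
     (\<forall>s\<ge>0. set_integrable (lborel \<Otimes>\<^sub>M lborel) ({0<..} \<times> {0<..})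
              (\<lambda>p. K (fst p) (snd p) * n s (fst p) * n s (snd p))) \<and>
     (\<forall>t\<ge>0. \<forall>\<phi>. coag_test_fun \<phi> \<longrightarrow>
        set_integrable lborel {0..t} (\<lambda>s. coag_op K n s \<phi>) \<and>
        (LINT x:{0<..}|lborel. \<phi> x * n t x) =
          (LINT x:{0<..}|lborel. \<phi> x * n 0 x) + (LINT s:{0..t}|lborel. coag_op K n s \<phi>))"

definition mass_conserving :: "(real \<Rightarrow> real \<Rightarrow> real) \<Rightarrow> bool" where
  "mass_conserving n \<longleftrightarrow>
     (\<forall>t\<ge>0. (LINT x:{0<..}|lborel. x * n t x) = (LINT x:{0<..}|lborel. x * n 0 x))"

definition add_norm :: "real \<Rightarrow> (real \<Rightarrow> real) \<Rightarrow> ereal" where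
  "add_norm \<kappa> g = (SUP \<eta>\<in>{0<..}. ereal (\<eta> powr (-\<kappa>) *
        \<bar>LINT x:{0<..}|lborel. (1 - exp (-(\<eta> * x))) * g x\<bar>))"

definition rescale :: "(real \<Rightarrow> real \<Rightarrow> real) \<Rightarrow> real \<Rightarrow> real \<Rightarrow> real" where
  "rescale n \<tau> z = exp (2 * \<tau>) * n (\<tau> / 2) (exp \<tau> * z)"

end

theory Submission
  imports Defs
begin

lemma exp_le_quad: "(d::real) \<ge> 0 \<Longrightarrow> exp (-d) \<le> 1 - d + d^2"
proof -
  assume d: "d \<ge> 0"
  have e: "exp d * exp (-d) = 1" by (simp add: exp_minus_inverse)
  have "1 + d \<le> exp d" by simp
  hence "(1 + d) * exp (-d) \<le> 1" using e by (metis exp_ge_zero mult_right_mono)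
  moreover have "1 \<le> (1 + d) * (1 - d + d^2)" using d by (simp add: power2_eq_square algebra_simps)
  ultimately have "(1 + d) * exp (-d) \<le> (1 + d) * (1 - d + d^2)" by linarith
  thus ?thesis using d by (simp add: mult_le_cancel_left_pos)
qed

lemma exp_m1_le: "(u::real) \<ge> 0 \<Longrightarrow> exp u - 1 \<le> u * exp u"
proof -
  assume u: "u \<ge> 0"
  have "1 - u \<le> exp (-u)" using exp_ge_add_one_self[of "-u"] by simp
  hence "exp u * (1 - u) \<le> exp u * exp (-u)" by (simp add: mult_left_mono)
  also have "\<dots> = 1" by (simp add: exp_minus_inverse)
  finally show ?thesis by (simp add: algebra_simps)
qed

lemma exp_quad_pos: "(u::real) \<ge> 0 \<Longrightarrow> exp u - 1 - u \<le> u^2 * exp u"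
proof -
  assume u: "u \<ge> 0"
  have a: "exp u - 1 \<le> u * exp u" using exp_m1_le[OF u] .
  have "exp u - 1 - u \<le> u * (exp u - 1)" using a by (simp add: algebra_simps)
  also have "\<dots> \<le> u * (u * exp u)" using a u by (simp add: mult_left_mono)
  finally show ?thesis by (simp add: power2_eq_square algebra_simps)
qed

lemma exp_quad_err:
  fixes a b :: real
  shows "\<bar>exp (-b) - exp (-a) + (b - a) * exp (-a)\<bar> \<le> (b - a)^2 * exp (- min a b)"
proof (cases "a \<le> b")
  case True
  define d where "d = b - a"
  have d: "d \<ge> 0" using True d_def by simp
  have eb: "exp (-b) = exp (-a) * exp (-d)" by (simp add: d_def flip: exp_add)
  have "exp (-d) - 1 + d \<ge> 0" using exp_ge_add_one_self[of "-d"] by simp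
  moreover have "exp (-d) - 1 + d \<le> d^2" using exp_le_quad[OF d] by simp
  ultimately have "\<bar>exp (-a) * (exp (-d) - 1 + d)\<bar> \<le> exp (-a) * d^2"
    by (simp add: abs_mult mult_left_mono)
  moreover have "exp (-b) - exp (-a) + (b - a) * exp (-a) = exp (-a) * (exp (-d) - 1 + d)"
    by (simp add: eb d_def algebra_simps)
  ultimately show ?thesis using True by (simp add: d_def min_def mult.commute)
next
  case False
  define u where "u = a - b"
  have u: "u \<ge> 0" using False u_def by simp
  have ea: "exp (-a) = exp (-b) * exp (-u)" by (simp add: u_def flip: exp_add)
  have eu: "exp (-u) * exp u = 1" by (simp add: exp_minus_inverse mult.commute)
  have eq: "exp (-b) - exp (-a) + (b - a) * exp (-a) = exp (-a) * (exp u - 1 - u)"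
    using eu by (simp add: ea u_def algebra_simps)
  have E: "exp u - 1 - u \<ge> 0" using exp_ge_add_one_self[of u] by linarith
  have "\<bar>exp (-a) * (exp u - 1 - u)\<bar> = exp (-a) * (exp u - 1 - u)" using E by simp
  also have "\<dots> \<le> exp (-a) * (u^2 * exp u)"
    using exp_quad_pos[OF u] by (simp add: mult_left_mono)
  also have "\<dots> = u^2 * exp (-b)"
    using eu by (simp add: ea algebra_simps)
  finally have "\<bar>exp (-b) - exp (-a) + (b - a) * exp (-a)\<bar> \<le> u^2 * exp (-b)" using eq by simp
  moreover have "u^2 = (b - a)^2" by (simp add: u_def power2_commute)
  ultimately show ?thesis using False by (simp add: min_def)
qed

lemma xexp_le: "(x::real) \<ge> 0 \<Longrightarrow> m > 0 \<Longrightarrow> x * exp (-(m * x)) \<le> 1 / m"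
proof -
  assume x: "x \<ge> 0" and m: "m > 0"
  have "m * x \<le> exp (m * x)" using exp_ge_add_one_self[of "m*x"] by linarith
  hence "m * x * exp (-(m*x)) \<le> exp (m*x) * exp (-(m*x))" by (simp add: mult_right_mono)
  also have "\<dots> = 1" by (simp add: exp_minus_inverse)
  finally have "m * (x * exp (-(m*x))) \<le> 1" by (simp add: mult.assoc)
  thus ?thesis using m by (simp add: field_simps mult.commute)
qed

lemma exp_diff_le:
  fixes a b :: real
  shows "\<bar>exp (-a) - exp (-b)\<bar> \<le> \<bar>a - b\<bar> * exp (- min a b)"
proof -
  have key: "exp (-a) - exp (-b) \<le> (b - a) * exp (-a)" if "a \<le> b" for a b :: real
  proof -
    have "exp (-b) = exp (-a) * exp (-(b - a))" by (simp flip: exp_add)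
    moreover have "1 - (b - a) \<le> exp (-(b - a))"
    proof -
      have h: "1 + (a - b) \<le> exp (a - b)" by (rule exp_ge_add_one_self)
      moreover have "-(b - a) = a - b" by simp
      ultimately show ?thesis by (metis add.commute diff_conv_add_uminus minus_diff_eq)
    qed
    ultimately have "exp (-a) * (1 - (b - a)) \<le> exp (-b)" by (simp add: mult_left_mono)
    thus ?thesis by (simp add: algebra_simps)
  qed
  show ?thesis
  proof (cases "a \<le> b")
    case True
    have "exp (-b) \<le> exp (-a)" using True by simp
    thus ?thesis using key[OF True] True by (simp add: min_def abs_if)
  next
    case False
    have "exp (-a) \<le> exp (-b)" using False by simp
    thus ?thesis using key[of b a] False by (simp add: min_def abs_if)
  qed
qed

lemma one_minus_exp_bounds: "(u::real) \<ge> 0 \<Longrightarrow> 0 \<le> 1 - exp (-u) \<and> 1 - exp (-u) \<le> u"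
  using exp_ge_add_one_self[of "-u"] by simp

lemma maxmin_lip:
  fixes a b c d :: real
  shows "\<bar>max 0 (min a b) - max 0 (min c d)\<bar> \<le> max \<bar>a - c\<bar> \<bar>b - d\<bar>"
  by (auto simp: max_def min_def abs_if)

lemma gen_cancel: "(A::real) \<noteq> 0 \<Longrightarrow> K * (A * A) / A = K * A"
  by (simp add: field_simps)

lemma quad_deriv:
  fixes f :: "real \<Rightarrow> real"
  assumes "\<delta> > 0" and "\<And>s. \<bar>s - t\<bar> < \<delta> \<Longrightarrow> \<bar>f s - f t - (s - t) * D\<bar> \<le> K * (s - t)^2"
  shows "(f has_real_derivative D) (at t)"
proof -
  have "((\<lambda>s. (f s - f t) / (s - t) - D) \<longlongrightarrow> 0) (at t)"
  proof (rule Lim_null_comparison[where g="\<lambda>s. \<bar>K\<bar> * \<bar>s - t\<bar>"])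
    have "eventually (\<lambda>s. s \<in> ball t \<delta>) (at t)"
      using assms(1) by (intro eventually_at_in_open') auto
    moreover have "eventually (\<lambda>s. s \<noteq> t) (at t)" by (simp add: eventually_at_filter)
    ultimately show "eventually (\<lambda>s. norm ((f s - f t) / (s - t) - D) \<le> \<bar>K\<bar> * \<bar>s - t\<bar>) (at t)"
    proof eventually_elim
      case (elim s)
      hence st: "\<bar>s - t\<bar> < \<delta>" "s \<noteq> t" by (auto simp: dist_real_def abs_minus_commute)
      have "(f s - f t) / (s - t) - D = (f s - f t - (s - t) * D) / (s - t)"
        using st by (simp add: field_simps)
      hence "norm ((f s - f t) / (s - t) - D) = \<bar>f s - f t - (s - t) * D\<bar> / \<bar>s - t\<bar>"
        by simp
      also have "\<dots> \<le> K * (s - t)^2 / \<bar>s - t\<bar>"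
        using assms(2)[OF st(1)] by (simp add: divide_right_mono)
      also have "\<dots> = K * \<bar>s - t\<bar>"
      proof -
        have a: "(s - t)^2 = \<bar>s - t\<bar> * \<bar>s - t\<bar>" by (simp add: power2_eq_square)
        have "K * (s - t)^2 / \<bar>s - t\<bar> = K * (\<bar>s - t\<bar> * \<bar>s - t\<bar>) / \<bar>s - t\<bar>"
          by (subst a) (rule refl)
        also have "\<dots> = K * \<bar>s - t\<bar>" using st gen_cancel[of "\<bar>s - t\<bar>" K] by simp
        finally show ?thesis .
      qed
      also have "\<dots> \<le> \<bar>K\<bar> * \<bar>s - t\<bar>" by (simp add: mult_right_mono)
      finally show ?case .
    qed
    show "((\<lambda>s. \<bar>K\<bar> * \<bar>s - t\<bar>) \<longlongrightarrow> 0) (at t)"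
      by (intro tendsto_eq_intros) (auto intro: tendsto_ident_at)
  qed
  thus ?thesis
    by (simp add: has_field_derivative_iff LIM_zero_iff)
qed

definition Nf :: "(real \<Rightarrow> real \<Rightarrow> real) \<Rightarrow> real \<Rightarrow> real \<Rightarrow> real" where
  "Nf n t x = indicator {0<..} x * n t x"

locale sol =
  fixes n :: "real \<Rightarrow> real \<Rightarrow> real"
  assumes S: "smol_solution (\<lambda>x y. x + y) n" and MC: "mass_conserving n"
    and M10: "(LINT x:{0<..}|lborel. x * n 0 x) = 1"
begin

abbreviation "N \<equiv> Nf n"
abbreviation "CO \<equiv> coag_op (\<lambda>x y. x + y) n"

lemma nonneg: "t \<ge> 0 \<Longrightarrow> x > 0 \<Longrightarrow> 0 \<le> n t x"
  using S by (auto simp: smol_solution_def)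

lemma N_nonneg: "t \<ge> 0 \<Longrightarrow> 0 \<le> N t x"
  by (auto simp: Nf_def indicator_def nonneg)

lemma N_zero: "x \<le> 0 \<Longrightarrow> N t x = 0"
  by (simp add: Nf_def)

lemma xN_nonneg: "t \<ge> 0 \<Longrightarrow> 0 \<le> x * N t x"
  by (cases "x \<le> 0") (auto simp: N_zero N_nonneg)

lemma N_int: "t \<ge> 0 \<Longrightarrow> integrable lborel (N t)"
proof -
  assume t: "t \<ge> 0"
  have "set_integrable lborel {0<..} (n t)" using S t by (auto simp: smol_solution_def)
  thus ?thesis by (simp add: set_integrable_def Nf_def[abs_def])
qed

lemma N_int1: "t \<ge> 0 \<Longrightarrow> integrable lborel (\<lambda>x. x * N t x)"
proof -
  assume t: "t \<ge> 0"
  have "set_integrable lborel {0<..} (\<lambda>x. x * n t x)" using S t by (auto simp: smol_solution_def)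
  moreover have "(\<lambda>x. indicator {0<..} x *\<^sub>R (x * n t x)) = (\<lambda>x. x * N t x)"
    by (auto simp: Nf_def)
  ultimately show ?thesis by (simp add: set_integrable_def)
qed

lemma N_meas: "t \<ge> 0 \<Longrightarrow> N t \<in> borel_measurable borel"
  using N_int borel_measurable_integrable by auto

lemma N_M1: "t \<ge> 0 \<Longrightarrow> integral\<^sup>L lborel (\<lambda>x. x * N t x) = 1"
proof -
  assume t: "t \<ge> 0"
  have "(LINT x:{0<..}|lborel. x * n t x) = 1" using MC M10 t by (simp add: mass_conserving_def)
  moreover have "(\<lambda>x. indicator {0<..} x *\<^sub>R (x * n t x)) = (\<lambda>x. x * N t x)"
    by (auto simp: Nf_def)
  ultimately show ?thesis by (simp add: set_lebesgue_integral_def)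
qed

lemma LINT_N: "(LINT x:{0<..}|lborel. g x * n t x) = integral\<^sup>L lborel (\<lambda>x. g x * N t x)"
proof -
  have "(\<lambda>x. indicator {0<..} x *\<^sub>R (g x * n t x)) = (\<lambda>x. g x * N t x)"
    by (auto simp: Nf_def)
  thus ?thesis by (simp add: set_lebesgue_integral_def)
qed

lemma int_lin:
  assumes t: "t \<ge> 0" and g: "g \<in> borel_measurable borel"
    and b: "\<And>x. x > 0 \<Longrightarrow> \<bar>g x\<bar> \<le> a + b * x" and ab: "a \<ge> 0" "b \<ge> 0"
  shows "integrable lborel (\<lambda>x. g x * N t x)"
proof (rule Bochner_Integration.integrable_bound)
  show "integrable lborel (\<lambda>x. a * N t x + b * (x * N t x))"
    using N_int[OF t] N_int1[OF t] by auto
  show "(\<lambda>x. g x * N t x) \<in> borel_measurable lborel"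
    using g N_meas[OF t] by measurable
  show "AE x in lborel. norm (g x * N t x) \<le> norm (a * N t x + b * (x * N t x))"
  proof (rule AE_I2)
    fix x
    show "norm (g x * N t x) \<le> norm (a * N t x + b * (x * N t x))"
    proof (cases "x > 0")
      case True
      have "norm (g x * N t x) = \<bar>g x\<bar> * N t x" using N_nonneg[OF t] by (simp add: abs_mult)
      also have "\<dots> \<le> (a + b * x) * N t x" using b[OF True] N_nonneg[OF t] by (simp add: mult_right_mono)
      also have "\<dots> \<le> norm (a * N t x + b * (x * N t x))" by (simp add: algebra_simps)
      finally show ?thesis .
    qed (simp add: N_zero)
  qed
qed

lemma weak0:
  assumes "t \<ge> 0" "coag_test_fun \<phi>"
  shows "set_integrable lborel {0..t} (\<lambda>s. CO s \<phi>)"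
    and "integral\<^sup>L lborel (\<lambda>x. \<phi> x * N t x) = integral\<^sup>L lborel (\<lambda>x. \<phi> x * N 0 x) + (LINT s:{0..t}|lborel. CO s \<phi>)"
proof -
  have "\<forall>t\<ge>0. \<forall>\<phi>. coag_test_fun \<phi> \<longrightarrow>
        set_integrable lborel {0..t} (\<lambda>s. CO s \<phi>) \<and>
        (LINT x:{0<..}|lborel. \<phi> x * n t x) =
          (LINT x:{0<..}|lborel. \<phi> x * n 0 x) + (LINT s:{0..t}|lborel. CO s \<phi>)"
    using S unfolding smol_solution_def by blast
  hence "set_integrable lborel {0..t} (\<lambda>s. CO s \<phi>) \<and>
        (LINT x:{0<..}|lborel. \<phi> x * n t x) =
          (LINT x:{0<..}|lborel. \<phi> x * n 0 x) + (LINT s:{0..t}|lborel. CO s \<phi>)"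
    using assms by blast
  thus "set_integrable lborel {0..t} (\<lambda>s. CO s \<phi>)"
    and "integral\<^sup>L lborel (\<lambda>x. \<phi> x * N t x) = integral\<^sup>L lborel (\<lambda>x. \<phi> x * N 0 x) + (LINT s:{0..t}|lborel. CO s \<phi>)"
    by (simp_all add: LINT_N)
qed

lemma coag_alt:
  "CO s \<phi> = 1/2 * integral\<^sup>L lborel (\<lambda>x. integral\<^sup>L lborel (\<lambda>y. (x + y) * (\<phi> (x + y) - \<phi> x - \<phi> y) * N s x * N s y))"
proof -
  have "(\<lambda>x. indicator {0<..} x *\<^sub>R (LINT y:{0<..}|lborel. (x + y) * (\<phi> (x + y) - \<phi> x - \<phi> y) * n s x * n s y))
     = (\<lambda>x. integral\<^sup>L lborel (\<lambda>y. (x + y) * (\<phi> (x + y) - \<phi> x - \<phi> y) * N s x * N s y))"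
  proof
    fix x
    have "(\<lambda>y. (x + y) * (\<phi> (x + y) - \<phi> x - \<phi> y) * N s x * N s y)
        = (\<lambda>y. indicator {0<..} x * (indicator {0<..} y *\<^sub>R ((x + y) * (\<phi> (x + y) - \<phi> x - \<phi> y) * n s x * n s y)))"
      by (auto simp: Nf_def)
    thus "indicator {0<..} x *\<^sub>R (LINT y:{0<..}|lborel. (x + y) * (\<phi> (x + y) - \<phi> x - \<phi> y) * n s x * n s y)
      = integral\<^sup>L lborel (\<lambda>y. (x + y) * (\<phi> (x + y) - \<phi> x - \<phi> y) * N s x * N s y)"
      by (simp add: set_lebesgue_integral_def)
  qed
  thus ?thesis by (simp add: coag_op_def set_lebesgue_integral_def)
qed

end

lemma abs_int_le: "\<bar>integral\<^sup>L M f\<bar> \<le> integral\<^sup>L M (\<lambda>x. norm (f x :: real))"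
  using integral_norm_bound[of M f] by simp

lemma Delta_bound:
  fixes \<psi> :: "real \<Rightarrow> real"
  assumes z: "\<psi> 0 = 0" and lip: "\<And>x z. x \<ge> 0 \<Longrightarrow> z \<ge> 0 \<Longrightarrow> \<bar>\<psi> x - \<psi> z\<bar> \<le> L * \<bar>x - z\<bar>"
    and x: "x \<ge> 0" and y: "y \<ge> 0"
  shows "\<bar>(x + y) * (\<psi> (x + y) - \<psi> x - \<psi> y)\<bar> \<le> 4 * L * x * y"
proof -
  have a: "\<bar>\<psi> (x + y) - \<psi> x\<bar> \<le> L * y" using lip[of "x+y" x] x y by simp
  have b: "\<bar>\<psi> y\<bar> \<le> L * y" using lip[of y 0] y z by simp
  have c: "\<bar>\<psi> (x + y) - \<psi> y\<bar> \<le> L * x" using lip[of "x+y" y] x y by simp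
  have d: "\<bar>\<psi> x\<bar> \<le> L * x" using lip[of x 0] x z by simp
  have D1: "\<bar>\<psi> (x + y) - \<psi> x - \<psi> y\<bar> \<le> 2 * L * y" using a b by linarith
  have D2: "\<bar>\<psi> (x + y) - \<psi> x - \<psi> y\<bar> \<le> 2 * L * x" using c d by linarith
  have "\<bar>(x + y) * (\<psi> (x + y) - \<psi> x - \<psi> y)\<bar> = x * \<bar>\<psi> (x + y) - \<psi> x - \<psi> y\<bar> + y * \<bar>\<psi> (x + y) - \<psi> x - \<psi> y\<bar>"
  proof -
    have "\<bar>(x + y) * (\<psi> (x + y) - \<psi> x - \<psi> y)\<bar> = (x + y) * \<bar>\<psi> (x + y) - \<psi> x - \<psi> y\<bar>"
      using x y by (simp add: abs_mult)
    thus ?thesis by (simp add: distrib_right)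
  qed
  also have "\<dots> \<le> x * (2 * L * y) + y * (2 * L * x)"
    using D1 D2 x y by (intro add_mono mult_left_mono) auto
  also have "\<dots> = 4 * L * x * y" by simp
  finally show ?thesis .
qed

context sol begin

lemma G_meas:
  assumes s: "s \<ge> 0" and m: "\<psi> \<in> borel_measurable borel"
  shows "(\<lambda>(x, y). (x + y) * (\<psi> (x + y) - \<psi> x - \<psi> y) * N s x * N s y) \<in> borel_measurable (lborel \<Otimes>\<^sub>M lborel)"
proof -
  note [measurable] = N_meas[OF s] m
  show ?thesis by measurable
qed

lemma inner_meas:
  assumes s: "s \<ge> 0" and m: "\<psi> \<in> borel_measurable borel"
  shows "(\<lambda>x. integral\<^sup>L lborel (\<lambda>y. (x + y) * (\<psi> (x + y) - \<psi> x - \<psi> y) * N s x * N s y)) \<in> borel_measurable lborel"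
  using lborel.borel_measurable_lebesgue_integral[OF G_meas[OF s m]] by simp

lemma G_bound:
  assumes s: "s \<ge> 0" and z: "\<psi> 0 = 0" and lip: "\<And>x z. x \<ge> 0 \<Longrightarrow> z \<ge> 0 \<Longrightarrow> \<bar>\<psi> x - \<psi> z\<bar> \<le> L * \<bar>x - z\<bar>"
    and L: "L \<ge> 0"
  shows "\<bar>(x + y) * (\<psi> (x + y) - \<psi> x - \<psi> y) * N s x * N s y\<bar> \<le> 4 * L * (x * N s x) * (y * N s y)"
proof (cases "x > 0 \<and> y > 0")
  case True
  have "\<bar>(x + y) * (\<psi> (x + y) - \<psi> x - \<psi> y) * N s x * N s y\<bar>
      = \<bar>(x + y) * (\<psi> (x + y) - \<psi> x - \<psi> y)\<bar> * (N s x * N s y)"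
    using N_nonneg[OF s] by (simp add: abs_mult)
  also have "\<dots> \<le> (4 * L * x * y) * (N s x * N s y)"
    using Delta_bound[OF z lip, of x y] True N_nonneg[OF s] by (intro mult_right_mono) auto
  also have "\<dots> = 4 * L * (x * N s x) * (y * N s y)" by simp
  finally show ?thesis .
next
  case False
  hence "N s x = 0 \<or> N s y = 0" using N_zero by force
  moreover have "0 \<le> 4 * L * (x * N s x) * (y * N s y)"
    using xN_nonneg[OF s] L by simp
  ultimately show ?thesis by auto
qed

lemma inner_bound:
  assumes s: "s \<ge> 0" and z: "\<psi> 0 = 0" and lip: "\<And>x z. x \<ge> 0 \<Longrightarrow> z \<ge> 0 \<Longrightarrow> \<bar>\<psi> x - \<psi> z\<bar> \<le> L * \<bar>x - z\<bar>"
    and L: "L \<ge> 0"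
  shows "\<bar>integral\<^sup>L lborel (\<lambda>y. (x + y) * (\<psi> (x + y) - \<psi> x - \<psi> y) * N s x * N s y)\<bar> \<le> 4 * L * (x * N s x)"
proof -
  have "\<bar>integral\<^sup>L lborel (\<lambda>y. (x + y) * (\<psi> (x + y) - \<psi> x - \<psi> y) * N s x * N s y)\<bar>
     \<le> integral\<^sup>L lborel (\<lambda>y. norm ((x + y) * (\<psi> (x + y) - \<psi> x - \<psi> y) * N s x * N s y))"
    by (rule abs_int_le)
  also have "\<dots> \<le> integral\<^sup>L lborel (\<lambda>y. 4 * L * (x * N s x) * (y * N s y))"
  proof (rule integral_mono')
    show "integrable lborel (\<lambda>y. 4 * L * (x * N s x) * (y * N s y))"
      using N_int1[OF s] by simp
    show "norm ((x + y) * (\<psi> (x + y) - \<psi> x - \<psi> y) * N s x * N s y) \<le> 4 * L * (x * N s x) * (y * N s y)" for y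
      using G_bound[OF s z lip L] by simp
    show "0 \<le> 4 * L * (x * N s x) * (y * N s y)" for y
      using xN_nonneg[OF s] L by simp
  qed
  also have "\<dots> = 4 * L * (x * N s x)" using N_M1[OF s] by simp
  finally show ?thesis .
qed

lemma coag_bound:
  assumes s: "s \<ge> 0" and z: "\<psi> 0 = 0" and lip: "\<And>x z. x \<ge> 0 \<Longrightarrow> z \<ge> 0 \<Longrightarrow> \<bar>\<psi> x - \<psi> z\<bar> \<le> L * \<bar>x - z\<bar>"
    and L: "L \<ge> 0"
  shows "\<bar>CO s \<psi>\<bar> \<le> 2 * L"
proof -
  let ?I = "\<lambda>x. integral\<^sup>L lborel (\<lambda>y. (x + y) * (\<psi> (x + y) - \<psi> x - \<psi> y) * N s x * N s y)"
  have "\<bar>integral\<^sup>L lborel ?I\<bar> \<le> integral\<^sup>L lborel (\<lambda>x. norm (?I x))"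
    by (rule abs_int_le)
  also have "\<dots> \<le> integral\<^sup>L lborel (\<lambda>x. 4 * L * (x * N s x))"
  proof (rule integral_mono')
    show "integrable lborel (\<lambda>x. 4 * L * (x * N s x))"
      using N_int1[OF s] by simp
    show "norm (?I x) \<le> 4 * L * (x * N s x)" for x
      using inner_bound[OF s z lip L] by simp
    show "0 \<le> 4 * L * (x * N s x)" for x
      using xN_nonneg[OF s] L by simp
  qed
  also have "\<dots> = 4 * L" using N_M1[OF s] by simp
  finally show ?thesis by (simp add: coag_alt abs_mult)
qed

end

context sol begin

lemma coag_conv:
  assumes s: "s \<ge> 0" and m: "\<And>k. \<psi>k k \<in> borel_measurable borel" and m\<psi>: "\<psi> \<in> borel_measurable borel"
    and z: "\<And>k. \<psi>k k 0 = 0"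
    and lip: "\<And>k x z. x \<ge> 0 \<Longrightarrow> z \<ge> 0 \<Longrightarrow> \<bar>\<psi>k k x - \<psi>k k z\<bar> \<le> L * \<bar>x - z\<bar>" and L: "L \<ge> 0"
    and conv: "\<And>x. x > 0 \<Longrightarrow> (\<lambda>k. \<psi>k k x) \<longlonglongrightarrow> \<psi> x"
  shows "(\<lambda>k. CO s (\<psi>k k)) \<longlonglongrightarrow> CO s \<psi>"
proof -
  let ?G = "\<lambda>k x y. (x + y) * (\<psi>k k (x + y) - \<psi>k k x - \<psi>k k y) * N s x * N s y"
  let ?H = "\<lambda>x y. (x + y) * (\<psi> (x + y) - \<psi> x - \<psi> y) * N s x * N s y"
  note [measurable] = N_meas[OF s] m\<psi>
  have inner: "(\<lambda>k. integral\<^sup>L lborel (?G k x)) \<longlonglongrightarrow> integral\<^sup>L lborel (?H x)" for x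
  proof (rule integral_dominated_convergence[where w="\<lambda>y. 4 * L * (x * N s x) * (y * N s y)"])
    show "?H x \<in> borel_measurable lborel" by measurable
    show "?G k x \<in> borel_measurable lborel" for k
    proof -
      note [measurable] = m[of k]
      show ?thesis by measurable
    qed
    show "integrable lborel (\<lambda>y. 4 * L * (x * N s x) * (y * N s y))"
      using N_int1[OF s] by simp
    show "AE y in lborel. (\<lambda>k. ?G k x y) \<longlonglongrightarrow> ?H x y"
    proof (rule AE_I2)
      fix y
      show "(\<lambda>k. ?G k x y) \<longlonglongrightarrow> ?H x y"
      proof (cases "x > 0 \<and> y > 0")
        case True
        hence "x + y > 0" by simp
        show ?thesis
          by (intro tendsto_intros conv True \<open>x + y > 0\<close> conjunct1[OF True] conjunct2[OF True])
      next
        case False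
        hence "N s x = 0 \<or> N s y = 0" using N_zero by force
        thus ?thesis by auto
      qed
    qed
    show "AE y in lborel. norm (?G k x y) \<le> 4 * L * (x * N s x) * (y * N s y)" for k
      using G_bound[OF s z lip L] by simp
  qed
  have outer: "(\<lambda>k. integral\<^sup>L lborel (\<lambda>x. integral\<^sup>L lborel (?G k x))) \<longlonglongrightarrow> integral\<^sup>L lborel (\<lambda>x. integral\<^sup>L lborel (?H x))"
  proof (rule integral_dominated_convergence[where w="\<lambda>x. 4 * L * (x * N s x)"])
    show "(\<lambda>x. integral\<^sup>L lborel (?H x)) \<in> borel_measurable lborel"
      by (rule inner_meas[OF s m\<psi>])
    show "(\<lambda>x. integral\<^sup>L lborel (?G k x)) \<in> borel_measurable lborel" for k
      by (rule inner_meas[OF s m])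
    show "integrable lborel (\<lambda>x. 4 * L * (x * N s x))"
      using N_int1[OF s] by simp
    show "AE x in lborel. (\<lambda>k. integral\<^sup>L lborel (?G k x)) \<longlonglongrightarrow> integral\<^sup>L lborel (?H x)"
      using inner by simp
    show "AE x in lborel. norm (integral\<^sup>L lborel (?G k x)) \<le> 4 * L * (x * N s x)" for k
      using inner_bound[OF s z lip L] by simp
  qed
  show ?thesis unfolding coag_alt
    by (intro tendsto_mult_left outer)
qed

end

context sol begin

lemma weak_ext:
  fixes \<phi> :: "real \<Rightarrow> real"
  assumes t: "t \<ge> 0" and cont: "continuous_on UNIV \<phi>" and \<phi>0: "\<phi> 0 = 0"
    and nn: "\<And>x. x \<ge> 0 \<Longrightarrow> 0 \<le> \<phi> x" and bd: "\<And>x. x \<ge> 0 \<Longrightarrow> \<phi> x \<le> B"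
    and lip: "\<And>x z. x \<ge> 0 \<Longrightarrow> z \<ge> 0 \<Longrightarrow> \<bar>\<phi> x - \<phi> z\<bar> \<le> L * \<bar>x - z\<bar>" and L: "L \<ge> 0"
  shows "set_integrable lborel {0..t} (\<lambda>s. CO s \<phi>) \<and>
    integral\<^sup>L lborel (\<lambda>x. \<phi> x * N t x) = integral\<^sup>L lborel (\<lambda>x. \<phi> x * N 0 x) + (LINT s:{0..t}|lborel. CO s \<phi>)"
proof -
  define \<phi>k where "\<phi>k k x = max 0 (min (\<phi> (max 0 x) - 1 / real (Suc k)) (B - x / real (Suc k)))" for k x
  have m\<phi>: "\<phi> \<in> borel_measurable borel" using cont by (rule borel_measurable_continuous_onI)
  have contk: "continuous_on UNIV (\<phi>k k)" for k
  proof -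
    have "continuous_on UNIV (\<lambda>x. \<phi> (max 0 x))"
      by (rule continuous_on_compose2[OF cont]) (auto intro: continuous_intros)
    thus ?thesis unfolding \<phi>k_def[abs_def] by (intro continuous_intros) auto
  qed
  have mk: "\<phi>k k \<in> borel_measurable borel" for k using contk by (rule borel_measurable_continuous_onI)
  have k0: "\<phi>k k 0 = 0" for k
  proof -
    have "min (- (1 / real (Suc k))) B \<le> - (1 / real (Suc k))" by (rule min.cobounded1)
    also have "\<dots> \<le> 0" by simp
    finally have "min (- (1 / real (Suc k))) B \<le> 0" .
    thus ?thesis by (simp add: \<phi>k_def \<phi>0)
  qed
  have klip: "\<bar>\<phi>k k x - \<phi>k k z\<bar> \<le> (L + 1) * \<bar>x - z\<bar>" if xz: "x \<ge> 0" "z \<ge> 0" for k x z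
  proof -
    have "\<bar>\<phi>k k x - \<phi>k k z\<bar> \<le> max \<bar>(\<phi> x - 1 / real (Suc k)) - (\<phi> z - 1 / real (Suc k))\<bar>
                                      \<bar>(B - x / real (Suc k)) - (B - z / real (Suc k))\<bar>"
      unfolding \<phi>k_def using xz maxmin_lip by simp
    also have "\<dots> \<le> (L + 1) * \<bar>x - z\<bar>"
    proof -
      have a: "\<bar>(\<phi> x - 1 / real (Suc k)) - (\<phi> z - 1 / real (Suc k))\<bar> \<le> L * \<bar>x - z\<bar>"
        using lip[OF xz] by simp
      have "\<bar>(B - x / real (Suc k)) - (B - z / real (Suc k))\<bar> = \<bar>x - z\<bar> / real (Suc k)"
      proof -
        have "(B - x / real (Suc k)) - (B - z / real (Suc k)) = (z - x) / real (Suc k)"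
          by (simp add: diff_divide_distrib)
        thus ?thesis by (simp add: abs_minus_commute)
      qed
      also have "\<dots> \<le> \<bar>x - z\<bar>"
      proof -
        have "\<bar>x - z\<bar> * 1 \<le> \<bar>x - z\<bar> * (1 + real k)" by (intro mult_left_mono) auto
        thus ?thesis by (simp add: divide_le_eq)
      qed
      finally have b: "\<bar>(B - x / real (Suc k)) - (B - z / real (Suc k))\<bar> \<le> \<bar>x - z\<bar>" .
      have c: "0 \<le> L * \<bar>x - z\<bar>" using L by simp
      have d: "0 \<le> \<bar>x - z\<bar>" by simp
      have "max \<bar>(\<phi> x - 1 / real (Suc k)) - (\<phi> z - 1 / real (Suc k))\<bar>
              \<bar>(B - x / real (Suc k)) - (B - z / real (Suc k))\<bar> \<le> L * \<bar>x - z\<bar> + \<bar>x - z\<bar>"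
        using a b c d by (intro max.boundedI) linarith+
      thus ?thesis by (simp add: distrib_right)
    qed
    finally show ?thesis .
  qed
  have kbd: "\<bar>\<phi>k k x\<bar> \<le> (L + 1) * x" if "x \<ge> 0" for k x
    using klip[of x 0 k] that k0 by simp
  have kconv: "(\<lambda>k. \<phi>k k x) \<longlonglongrightarrow> \<phi> x" if x: "x > 0" for x
  proof -
    have i: "(\<lambda>k. 1 / real (Suc k)) \<longlonglongrightarrow> 0"
      using LIMSEQ_inverse_real_of_nat by (simp add: divide_inverse)
    have "(\<lambda>k. max 0 (min (\<phi> (max 0 x) - 1 / real (Suc k)) (B - x * (1 / real (Suc k)))))
        \<longlonglongrightarrow> max 0 (min (\<phi> (max 0 x) - 0) (B - x * 0))"
      by (intro tendsto_intros i)
    moreover have "max 0 (min (\<phi> (max 0 x) - 0) (B - x * 0)) = \<phi> x"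
      using x nn[of x] bd[of x] by simp
    ultimately show ?thesis by (simp add: \<phi>k_def)
  qed
  have ktest: "coag_test_fun (\<phi>k k)" for k
  proof -
    define a where "a = 1 / (real (Suc k) * (L + 1))"
    define b where "b = B * real (Suc k)"
    have a: "a > 0" using L by (simp add: a_def)
    have "\<phi>k k x = 0" if "x \<notin> {a..b}" for x
    proof (cases "x < a")
      case True
      have "\<phi> (max 0 x) < 1 / real (Suc k)"
      proof (cases "x \<le> 0")
        case True thus ?thesis by (simp add: \<phi>0)
      next
        case False
        have "\<phi> x \<le> L * x" using lip[of x 0] False \<phi>0 by simp
        also have "\<dots> \<le> L * a" using True L False by (simp add: mult_left_mono)
        also have "\<dots> < 1 / real (Suc k)"
        proof -
          have "L * a = (L / (L + 1)) * (1 / real (Suc k))" by (simp add: a_def field_simps)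
          also have "\<dots> < 1 * (1 / real (Suc k))"
            using L by (intro mult_strict_right_mono) auto
          finally show ?thesis by simp
        qed
        finally show ?thesis using False by simp
      qed
      thus ?thesis by (simp add: \<phi>k_def min_def)
    next
      case False
      hence "x > b" using that by auto
      hence "B - x / real (Suc k) < 0" by (simp add: b_def field_simps)
      thus ?thesis by (simp add: \<phi>k_def min_def)
    qed
    thus ?thesis unfolding coag_test_fun_def using contk a by blast
  qed
  have L1: "L + 1 \<ge> 0" using L by simp
  have cobd: "\<bar>CO s (\<phi>k k)\<bar> \<le> 2 * (L + 1)" if "s \<ge> 0" for s k
    using coag_bound[OF that k0 klip L1] by simp
  have co_conv: "(\<lambda>k. CO s (\<phi>k k)) \<longlonglongrightarrow> CO s \<phi>" if "s \<ge> 0" for s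
    by (rule coag_conv[OF that mk m\<phi> k0 klip L1 kconv]) auto
  let ?f = "\<lambda>k s. indicator {0..t} s *\<^sub>R CO s (\<phi>k k)"
  let ?F = "\<lambda>s. indicator {0..t} s *\<^sub>R CO s \<phi>"
  have meas_f: "?f k \<in> borel_measurable lborel" for k
    using weak0(1)[OF t ktest[of k]] unfolding set_integrable_def by (rule borel_measurable_integrable)
  have conv_f: "(\<lambda>k. ?f k s) \<longlonglongrightarrow> ?F s" for s
  proof (cases "s \<in> {0..t}")
    case True thus ?thesis using co_conv[of s] by simp
  qed simp
  have meas_F: "?F \<in> borel_measurable lborel"
    by (rule borel_measurable_LIMSEQ_real[OF conv_f meas_f])
  have w_int: "integrable lborel (\<lambda>s. indicator {0..t} s * (2 * (L + 1)))"
    using t by (intro integrable_mult_left integrable_real_indicator) (auto simp: emeasure_lborel_Icc)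
  have bd_f: "norm (?f k s) \<le> indicator {0..t} s * (2 * (L + 1))" for k s
    using cobd[of s k] by (auto simp: indicator_def)
  have time_lim: "(\<lambda>k. integral\<^sup>L lborel (?f k)) \<longlonglongrightarrow> integral\<^sup>L lborel ?F"
  proof (rule integral_dominated_convergence[OF meas_F meas_f w_int])
    show "AE x in lborel. (\<lambda>k. ?f k x) \<longlonglongrightarrow> ?F x" using conv_f by (intro AE_I2) 
    show "AE x in lborel. norm (?f k x) \<le> indicator {0..t} x * (2 * (L + 1))" for k
      using bd_f by (intro AE_I2)
  qed
  have F_int: "set_integrable lborel {0..t} (\<lambda>s. CO s \<phi>)"
    unfolding set_integrable_def
  proof (rule Bochner_Integration.integrable_bound[OF w_int meas_F])
    show "AE s in lborel. norm (?F s) \<le> norm (indicator {0..t} s * (2 * (L + 1)))"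
    proof (rule AE_I2)
      fix s
      show "norm (?F s) \<le> norm (indicator {0..t} s * (2 * (L + 1)))"
      proof (cases "s \<in> {0..t}")
        case True
        hence "\<bar>CO s \<phi>\<bar> \<le> 2 * L" using coag_bound[OF _ \<phi>0 lip L] by simp
        thus ?thesis using True L by simp
      qed simp
    qed
  qed
  have x_lim: "(\<lambda>k. integral\<^sup>L lborel (\<lambda>x. \<phi>k k x * N r x)) \<longlonglongrightarrow> integral\<^sup>L lborel (\<lambda>x. \<phi> x * N r x)"
    if r: "r \<ge> 0" for r
  proof (rule integral_dominated_convergence[where w="\<lambda>x. (L + 1) * (x * N r x)"])
    note [measurable] = N_meas[OF r] m\<phi>
    show "(\<lambda>x. \<phi> x * N r x) \<in> borel_measurable lborel" by measurable
    show "(\<lambda>x. \<phi>k k x * N r x) \<in> borel_measurable lborel" for k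
    proof -
      note [measurable] = mk[of k]
      show ?thesis by measurable
    qed
    show "integrable lborel (\<lambda>x. (L + 1) * (x * N r x))" using N_int1[OF r] by simp
    show "AE x in lborel. (\<lambda>k. \<phi>k k x * N r x) \<longlonglongrightarrow> \<phi> x * N r x"
    proof (rule AE_I2)
      fix x show "(\<lambda>k. \<phi>k k x * N r x) \<longlonglongrightarrow> \<phi> x * N r x"
      proof (cases "x > 0")
        case True thus ?thesis by (intro tendsto_intros kconv)
      qed (simp add: N_zero)
    qed
    show "AE x in lborel. norm (\<phi>k k x * N r x) \<le> (L + 1) * (x * N r x)" for k
    proof (rule AE_I2)
      fix x show "norm (\<phi>k k x * N r x) \<le> (L + 1) * (x * N r x)"
      proof (cases "x > 0")
        case True
        have "norm (\<phi>k k x * N r x) = \<bar>\<phi>k k x\<bar> * N r x" using N_nonneg[OF r] by (simp add: abs_mult)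
        also have "\<dots> \<le> (L + 1) * x * N r x"
          using kbd[of x k] True N_nonneg[OF r] by (intro mult_right_mono) auto
        finally show ?thesis by simp
      qed (simp add: N_zero)
    qed
  qed
  have eqk: "integral\<^sup>L lborel (\<lambda>x. \<phi>k k x * N t x) = integral\<^sup>L lborel (\<lambda>x. \<phi>k k x * N 0 x) + integral\<^sup>L lborel (?f k)" for k
    using weak0(2)[OF t ktest[of k]] by (simp add: set_lebesgue_integral_def)
  have lim2: "(\<lambda>k. integral\<^sup>L lborel (\<lambda>x. \<phi>k k x * N t x)) \<longlonglongrightarrow> integral\<^sup>L lborel (\<lambda>x. \<phi> x * N 0 x) + integral\<^sup>L lborel ?F"
    unfolding eqk by (intro tendsto_add x_lim time_lim) simp
  have "integral\<^sup>L lborel (\<lambda>x. \<phi> x * N t x) = integral\<^sup>L lborel (\<lambda>x. \<phi> x * N 0 x) + integral\<^sup>L lborel ?F"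
    using LIMSEQ_unique[OF x_lim[OF t] lim2] .
  thus ?thesis using F_int by (simp add: set_lebesgue_integral_def)
qed

end

lemma int_diff_bound_le:
  fixes f :: "real \<Rightarrow> real"
  assumes rt: "0 \<le> r" "r \<le> t" and it: "set_integrable lborel {0..t} f"
    and b: "\<And>s. r \<le> s \<Longrightarrow> s \<le> t \<Longrightarrow> \<bar>f s - c\<bar> \<le> e"
  shows "\<bar>(LINT s:{0..t}|lborel. f s) - (LINT s:{0..r}|lborel. f s) - (t - r) * c\<bar> \<le> e * (t - r)"
proof -
  have ir: "set_integrable lborel {0..r} f" by (rule set_integrable_subset[OF it]) (use rt in auto)
  have irt: "set_integrable lborel {r<..t} f" by (rule set_integrable_subset[OF it]) (use rt in auto)
  have un: "{0..t} = {0..r} \<union> {r<..t}" using rt by auto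
  have split: "(LINT s:{0..t}|lborel. f s) = (LINT s:{0..r}|lborel. f s) + (LINT s:{r<..t}|lborel. f s)"
    unfolding un by (rule set_integral_Un[OF _ ir irt]) auto
  have mc: "measure lborel {r<..t} = t - r" using rt by (simp add: measure_def)
  have cI: "(LINT s:{r<..t}|lborel. c) = (t - r) * c" using rt by (simp add: set_integral_const mc)
  have eI: "(LINT s:{r<..t}|lborel. e) = (t - r) * e" using rt by (simp add: set_integral_const mc)
  have ic': "set_integrable lborel {r<..t} (\<lambda>s. x)" for x :: real
    unfolding set_integrable_def using rt
    by (simp add: integrable_real_mult_indicator[of _ _ "\<lambda>_. x", simplified] mult.commute)
  have up: "(LINT s:{r<..t}|lborel. f s) \<le> (LINT s:{r<..t}|lborel. c + e)"
  proof (rule set_integral_mono[OF irt ic'])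
    fix s assume "s \<in> {r<..t}"
    hence "\<bar>f s - c\<bar> \<le> e" using b by auto
    thus "f s \<le> c + e" by linarith
  qed
  have lo: "(LINT s:{r<..t}|lborel. c - e) \<le> (LINT s:{r<..t}|lborel. f s)"
  proof (rule set_integral_mono[OF ic' irt])
    fix s assume "s \<in> {r<..t}"
    hence "\<bar>f s - c\<bar> \<le> e" using b by auto
    thus "c - e \<le> f s" by linarith
  qed
  have "(LINT s:{r<..t}|lborel. c + e) = (t - r) * (c + e)" using rt by (simp add: set_integral_const mc)
  moreover have "(LINT s:{r<..t}|lborel. c - e) = (t - r) * (c - e)" using rt by (simp add: set_integral_const mc)
  ultimately show ?thesis using up lo split by (simp add: abs_le_iff algebra_simps)
qed

lemma int_diff_bound:
  fixes f :: "real \<Rightarrow> real"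
  assumes "0 \<le> r" "0 \<le> t" and it: "set_integrable lborel {0..t} f" and ir: "set_integrable lborel {0..r} f"
    and b: "\<And>s. min r t \<le> s \<Longrightarrow> s \<le> max r t \<Longrightarrow> \<bar>f s - c\<bar> \<le> e"
  shows "\<bar>(LINT s:{0..t}|lborel. f s) - (LINT s:{0..r}|lborel. f s) - (t - r) * c\<bar> \<le> e * \<bar>t - r\<bar>"
proof (cases "r \<le> t")
  case True
  thus ?thesis using int_diff_bound_le[OF assms(1) True it] b by (simp add: min_def max_def)
next
  case False
  hence "\<bar>(LINT s:{0..r}|lborel. f s) - (LINT s:{0..t}|lborel. f s) - (r - t) * c\<bar> \<le> e * (r - t)"
    using int_diff_bound_le[OF assms(2) _ ir, of c e] b by (simp add: min_def max_def)
  thus ?thesis using False by (simp add: abs_minus_commute algebra_simps)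
qed

definition FL :: "(real \<Rightarrow> real \<Rightarrow> real) \<Rightarrow> real \<Rightarrow> real \<Rightarrow> real" where
  "FL n t \<eta> = integral\<^sup>L lborel (\<lambda>x. (1 - exp (-(\<eta> * x))) * Nf n t x)"

definition PL :: "(real \<Rightarrow> real \<Rightarrow> real) \<Rightarrow> real \<Rightarrow> real \<Rightarrow> real" where
  "PL n t \<eta> = integral\<^sup>L lborel (\<lambda>x. (x * exp (-(\<eta> * x))) * Nf n t x)"

context sol begin

abbreviation "F \<equiv> FL n"
abbreviation "P \<equiv> PL n"

lemma F_int: "t \<ge> 0 \<Longrightarrow> \<eta> \<ge> 0 \<Longrightarrow> integrable lborel (\<lambda>x. (1 - exp (-(\<eta> * x))) * N t x)"
  by (rule int_lin[where a=1 and b=0]) auto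

lemma P_int: "t \<ge> 0 \<Longrightarrow> \<eta> \<ge> 0 \<Longrightarrow> integrable lborel (\<lambda>x. (x * exp (-(\<eta> * x))) * N t x)"
proof (rule int_lin[where a=0 and b=1])
  fix x :: real assume "\<eta> \<ge> 0" "x > 0"
  hence "exp (-(\<eta> * x)) \<le> 1" by simp
  thus "\<bar>x * exp (- (\<eta> * x))\<bar> \<le> 0 + 1 * x" using \<open>x > 0\<close> by (simp add: abs_mult mult_left_le)
qed auto

lemma F_bounds:
  assumes t: "t \<ge> 0" and e: "\<eta> \<ge> 0"
  shows "0 \<le> F t \<eta> \<and> F t \<eta> \<le> \<eta>"
proof
  show "0 \<le> F t \<eta>" unfolding FL_def
  proof (rule integral_nonneg_AE, rule AE_I2)
    fix x :: real
    show "0 \<le> (1 - exp (-(\<eta> * x))) * N t x"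
    proof (cases "x > 0")
      case True
      hence "0 \<le> 1 - exp (-(\<eta> * x))" using one_minus_exp_bounds[of "\<eta> * x"] e by simp
      thus ?thesis using N_nonneg[OF t] by simp
    qed (simp add: N_zero)
  qed
  have "F t \<eta> \<le> integral\<^sup>L lborel (\<lambda>x. \<eta> * (x * N t x))" unfolding FL_def
  proof (rule integral_mono[OF F_int[OF t e]])
    show "integrable lborel (\<lambda>x. \<eta> * (x * N t x))" using N_int1[OF t] by simp
    fix x :: real
    show "(1 - exp (-(\<eta> * x))) * N t x \<le> \<eta> * (x * N t x)"
    proof (cases "x > 0")
      case True
      have "1 - exp (-(\<eta> * x)) \<le> \<eta> * x" using one_minus_exp_bounds[of "\<eta> * x"] True e by simp
      thus ?thesis using N_nonneg[OF t] by (simp add: mult_right_mono mult.assoc flip: mult.assoc)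
    qed (simp add: N_zero)
  qed
  also have "\<dots> = \<eta>" using N_M1[OF t] by simp
  finally show "F t \<eta> \<le> \<eta>" .
qed

lemma P_bounds:
  assumes t: "t \<ge> 0" and e: "\<eta> \<ge> 0"
  shows "0 \<le> P t \<eta> \<and> P t \<eta> \<le> 1"
proof
  show "0 \<le> P t \<eta>" unfolding PL_def
  proof (rule integral_nonneg_AE, rule AE_I2)
    fix x :: real
    have "0 \<le> exp (-(\<eta> * x)) * (x * N t x)" using xN_nonneg[OF t] by simp
    thus "0 \<le> x * exp (-(\<eta> * x)) * N t x" by (simp add: mult_ac)
  qed
  have "P t \<eta> \<le> integral\<^sup>L lborel (\<lambda>x. x * N t x)" unfolding PL_def
  proof (rule integral_mono[OF P_int[OF t e] N_int1[OF t]])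
    fix x :: real
    show "x * exp (-(\<eta> * x)) * N t x \<le> x * N t x"
    proof (cases "x > 0")
      case True
      have "exp (-(\<eta> * x)) \<le> 1" using True e by simp
      hence "exp (-(\<eta> * x)) * (x * N t x) \<le> 1 * (x * N t x)"
        using xN_nonneg[OF t] by (intro mult_right_mono) auto
      thus ?thesis by (simp add: mult_ac)
    qed (simp add: N_zero)
  qed
  also have "\<dots> = 1" using N_M1[OF t] by simp
  finally show "P t \<eta> \<le> 1" .
qed

end

lemma int_abs_le:
  fixes f g :: "'a \<Rightarrow> real"
  assumes "integrable M g" "\<And>x. \<bar>f x\<bar> \<le> g x"
  shows "\<bar>integral\<^sup>L M f\<bar> \<le> integral\<^sup>L M g"
proof -
  have "\<bar>integral\<^sup>L M f\<bar> \<le> integral\<^sup>L M (\<lambda>x. norm (f x))" by (rule abs_int_le)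
  also have "\<dots> \<le> integral\<^sup>L M g"
  proof (rule integral_mono'[OF assms(1)])
    fix x show "norm (f x) \<le> g x" using assms(2)[of x] by simp
    show "0 \<le> g x" using assms(2)[of x] by (meson abs_ge_zero order_trans)
  qed
  finally show ?thesis .
qed

context sol begin

lemma F_lip:
  assumes t: "t \<ge> 0" and e: "\<eta> \<ge> 0" "\<eta>' \<ge> 0"
  shows "\<bar>F t \<eta> - F t \<eta>'\<bar> \<le> \<bar>\<eta> - \<eta>'\<bar>"
proof -
  have "\<bar>F t \<eta> - F t \<eta>'\<bar> = \<bar>integral\<^sup>L lborel (\<lambda>x. (1 - exp (-(\<eta> * x))) * N t x - (1 - exp (-(\<eta>' * x))) * N t x)\<bar>"
    unfolding FL_def Bochner_Integration.integral_diff[OF F_int[OF t e(1)] F_int[OF t e(2)]] ..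
  also have "\<dots> \<le> integral\<^sup>L lborel (\<lambda>x. \<bar>\<eta> - \<eta>'\<bar> * (x * N t x))"
  proof (rule int_abs_le)
    show "integrable lborel (\<lambda>x. \<bar>\<eta> - \<eta>'\<bar> * (x * N t x))" using N_int1[OF t] by simp
    fix x :: real
    show "\<bar>(1 - exp (-(\<eta> * x))) * N t x - (1 - exp (-(\<eta>' * x))) * N t x\<bar> \<le> \<bar>\<eta> - \<eta>'\<bar> * (x * N t x)"
    proof (cases "x > 0")
      case True
      have "\<bar>exp (-(\<eta>' * x)) - exp (-(\<eta> * x))\<bar> \<le> \<bar>\<eta>' * x - \<eta> * x\<bar> * exp (- min (\<eta>' * x) (\<eta> * x))"
        by (rule exp_diff_le)
      also have "\<dots> \<le> \<bar>\<eta>' * x - \<eta> * x\<bar> * 1"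
        by (rule mult_left_mono) (use True e in \<open>auto simp: min_def\<close>)
      also have "\<dots> = \<bar>\<eta> - \<eta>'\<bar> * x"
      proof -
        have "\<eta>' * x - \<eta> * x = (\<eta>' - \<eta>) * x" by (simp add: left_diff_distrib)
        hence "\<bar>\<eta>' * x - \<eta> * x\<bar> * 1 = \<bar>\<eta>' - \<eta>\<bar> * x" using True by (simp add: abs_mult)
        thus ?thesis by (simp add: abs_minus_commute[of \<eta>' \<eta>])
      qed
      finally have a: "\<bar>exp (-(\<eta>' * x)) - exp (-(\<eta> * x))\<bar> \<le> \<bar>\<eta> - \<eta>'\<bar> * x" .
      have "\<bar>(1 - exp (-(\<eta> * x))) * N t x - (1 - exp (-(\<eta>' * x))) * N t x\<bar>
          = \<bar>exp (-(\<eta>' * x)) - exp (-(\<eta> * x))\<bar> * N t x"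
      proof -
        have "(1 - exp (-(\<eta> * x))) * N t x - (1 - exp (-(\<eta>' * x))) * N t x
            = (exp (-(\<eta>' * x)) - exp (-(\<eta> * x))) * N t x" by (simp add: algebra_simps)
        thus ?thesis using N_nonneg[OF t] by (simp add: abs_mult)
      qed
      also have "\<dots> \<le> (\<bar>\<eta> - \<eta>'\<bar> * x) * N t x" using a N_nonneg[OF t] by (rule mult_right_mono)
      finally show ?thesis by (simp add: mult.assoc)
    qed (simp add: N_zero)
  qed
  also have "\<dots> = \<bar>\<eta> - \<eta>'\<bar>" using N_M1[OF t] by simp
  finally show ?thesis .
qed

lemma F_mono:
  assumes t: "t \<ge> 0" and e: "0 \<le> \<eta>" "\<eta> \<le> \<eta>'"
  shows "F t \<eta> \<le> F t \<eta>'"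
  unfolding FL_def
proof (rule integral_mono[OF F_int[OF t e(1)] F_int[OF t]])
  show "0 \<le> \<eta>'" using e by simp
  fix x :: real
  show "(1 - exp (-(\<eta> * x))) * N t x \<le> (1 - exp (-(\<eta>' * x))) * N t x"
  proof (cases "x > 0")
    case True
    have "\<eta> * x \<le> \<eta>' * x" by (rule mult_right_mono) (use e True in auto)
    hence "exp (-(\<eta>' * x)) \<le> exp (-(\<eta> * x))" by simp
    hence "1 - exp (-(\<eta> * x)) \<le> 1 - exp (-(\<eta>' * x))" by simp
    thus ?thesis using N_nonneg[OF t] by (rule mult_right_mono)
  qed (simp add: N_zero)
qed

lemma P_lip:
  assumes t: "t \<ge> 0" and m: "m > 0" and e: "\<eta> \<ge> m" "\<eta>' \<ge> m"
  shows "\<bar>P t \<eta> - P t \<eta>'\<bar> \<le> \<bar>\<eta> - \<eta>'\<bar> / m"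
proof -
  have e0: "\<eta> \<ge> 0" "\<eta>' \<ge> 0" using e m by auto
  have "\<bar>P t \<eta> - P t \<eta>'\<bar> = \<bar>integral\<^sup>L lborel (\<lambda>x. x * exp (-(\<eta> * x)) * N t x - x * exp (-(\<eta>' * x)) * N t x)\<bar>"
    unfolding PL_def Bochner_Integration.integral_diff[OF P_int[OF t e0(1)] P_int[OF t e0(2)]] ..
  also have "\<dots> \<le> integral\<^sup>L lborel (\<lambda>x. \<bar>\<eta> - \<eta>'\<bar> / m * (x * N t x))"
  proof (rule int_abs_le)
    show "integrable lborel (\<lambda>x. \<bar>\<eta> - \<eta>'\<bar> / m * (x * N t x))" using N_int1[OF t] by simp
    fix x :: real
    show "\<bar>x * exp (-(\<eta> * x)) * N t x - x * exp (-(\<eta>' * x)) * N t x\<bar> \<le> \<bar>\<eta> - \<eta>'\<bar> / m * (x * N t x)"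
    proof (cases "x > 0")
      case True
      have "\<bar>exp (-(\<eta> * x)) - exp (-(\<eta>' * x))\<bar> \<le> \<bar>\<eta> * x - \<eta>' * x\<bar> * exp (- min (\<eta> * x) (\<eta>' * x))"
        by (rule exp_diff_le)
      also have "\<dots> \<le> \<bar>\<eta> * x - \<eta>' * x\<bar> * exp (-(m * x))"
      proof -
        have "m * x \<le> \<eta> * x" by (rule mult_right_mono) (use e True in auto)
        moreover have "m * x \<le> \<eta>' * x" by (rule mult_right_mono) (use e True in auto)
        ultimately have "m * x \<le> min (\<eta> * x) (\<eta>' * x)" by simp
        hence "exp (- min (\<eta> * x) (\<eta>' * x)) \<le> exp (-(m * x))" by simp
        thus ?thesis by (rule mult_left_mono) simp
      qed
      also have "\<dots> = \<bar>\<eta> - \<eta>'\<bar> * (x * exp (-(m * x)))"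
      proof -
        have "\<eta> * x - \<eta>' * x = (\<eta> - \<eta>') * x" by (simp add: left_diff_distrib)
        thus ?thesis using True by (simp add: abs_mult)
      qed
      also have "\<dots> \<le> \<bar>\<eta> - \<eta>'\<bar> * (1 / m)"
        by (rule mult_left_mono) (use xexp_le[of x m] True m in auto)
      finally have a: "\<bar>exp (-(\<eta> * x)) - exp (-(\<eta>' * x))\<bar> \<le> \<bar>\<eta> - \<eta>'\<bar> / m" by simp
      have "\<bar>x * exp (-(\<eta> * x)) * N t x - x * exp (-(\<eta>' * x)) * N t x\<bar>
          = \<bar>exp (-(\<eta> * x)) - exp (-(\<eta>' * x))\<bar> * (x * N t x)"
      proof -
        have "x * exp (-(\<eta> * x)) * N t x - x * exp (-(\<eta>' * x)) * N t x
            = (exp (-(\<eta> * x)) - exp (-(\<eta>' * x))) * (x * N t x)" by (simp add: algebra_simps)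
        thus ?thesis using True N_nonneg[OF t, of x] by (simp add: abs_mult)
      qed
      also have "\<dots> \<le> \<bar>\<eta> - \<eta>'\<bar> / m * (x * N t x)" using a xN_nonneg[OF t] by (rule mult_right_mono)
      finally show ?thesis .
    qed (simp add: N_zero)
  qed
  also have "\<dots> = \<bar>\<eta> - \<eta>'\<bar> / m" using N_M1[OF t] by simp
  finally show ?thesis .
qed

lemma F_taylor:
  assumes t: "t \<ge> 0" and m: "m > 0" and e: "\<eta> \<ge> m" "\<eta>' \<ge> m"
  shows "\<bar>F t \<eta>' - F t \<eta> - (\<eta>' - \<eta>) * P t \<eta>\<bar> \<le> (\<eta>' - \<eta>)^2 / m"
proof -
  have e0: "\<eta> \<ge> 0" "\<eta>' \<ge> 0" using e m by auto
  have "\<bar>F t \<eta>' - F t \<eta> - (\<eta>' - \<eta>) * P t \<eta>\<bar> = \<bar>integral\<^sup>L lborel (\<lambda>x. (1 - exp (-(\<eta>' * x))) * N t x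
        - (1 - exp (-(\<eta> * x))) * N t x - (\<eta>' - \<eta>) * (x * exp (-(\<eta> * x)) * N t x))\<bar>"
  proof -
    have i1: "integrable lborel (\<lambda>x. (1 - exp (-(\<eta>' * x))) * N t x - (1 - exp (-(\<eta> * x))) * N t x)"
      by (rule Bochner_Integration.integrable_diff[OF F_int[OF t e0(2)] F_int[OF t e0(1)]])
    have i2: "integrable lborel (\<lambda>x. (\<eta>' - \<eta>) * (x * exp (-(\<eta> * x)) * N t x))"
      by (rule integrable_mult_right[OF P_int[OF t e0(1)]])
    have "integral\<^sup>L lborel (\<lambda>x. (1 - exp (-(\<eta>' * x))) * N t x
        - (1 - exp (-(\<eta> * x))) * N t x - (\<eta>' - \<eta>) * (x * exp (-(\<eta> * x)) * N t x))
        = integral\<^sup>L lborel (\<lambda>x. (1 - exp (-(\<eta>' * x))) * N t x - (1 - exp (-(\<eta> * x))) * N t x)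
          - integral\<^sup>L lborel (\<lambda>x. (\<eta>' - \<eta>) * (x * exp (-(\<eta> * x)) * N t x))"
      by (rule Bochner_Integration.integral_diff[OF i1 i2])
    also have "\<dots> = F t \<eta>' - F t \<eta> - (\<eta>' - \<eta>) * P t \<eta>"
      unfolding FL_def PL_def Bochner_Integration.integral_diff[OF F_int[OF t e0(2)] F_int[OF t e0(1)]] integral_mult_right_zero ..
    finally show ?thesis by (rule arg_cong[where f=abs, symmetric])
  qed
  also have "\<dots> \<le> integral\<^sup>L lborel (\<lambda>x. (\<eta>' - \<eta>)^2 / m * (x * N t x))"
  proof (rule int_abs_le)
    show "integrable lborel (\<lambda>x. (\<eta>' - \<eta>)^2 / m * (x * N t x))" using N_int1[OF t] by simp
    fix x :: real
    show "\<bar>(1 - exp (-(\<eta>' * x))) * N t x - (1 - exp (-(\<eta> * x))) * N t x - (\<eta>' - \<eta>) * (x * exp (-(\<eta> * x)) * N t x)\<bar>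
          \<le> (\<eta>' - \<eta>)^2 / m * (x * N t x)"
    proof (cases "x > 0")
      case True
      have "\<bar>exp (-(\<eta>' * x)) - exp (-(\<eta> * x)) + (\<eta>' * x - \<eta> * x) * exp (-(\<eta> * x))\<bar>
            \<le> (\<eta>' * x - \<eta> * x)^2 * exp (- min (\<eta> * x) (\<eta>' * x))"
        by (rule exp_quad_err)
      also have "\<dots> \<le> (\<eta>' * x - \<eta> * x)^2 * exp (-(m * x))"
      proof -
        have "m * x \<le> \<eta> * x" by (rule mult_right_mono) (use e True in auto)
        moreover have "m * x \<le> \<eta>' * x" by (rule mult_right_mono) (use e True in auto)
        ultimately have "m * x \<le> min (\<eta> * x) (\<eta>' * x)" by simp
        hence "exp (- min (\<eta> * x) (\<eta>' * x)) \<le> exp (-(m * x))" by simp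
        thus ?thesis by (rule mult_left_mono) simp
      qed
      also have "\<dots> = (\<eta>' - \<eta>)^2 * x * (x * exp (-(m * x)))"
        by (simp add: power2_eq_square algebra_simps)
      also have "\<dots> \<le> (\<eta>' - \<eta>)^2 * x * (1 / m)"
        by (rule mult_left_mono) (use xexp_le[of x m] True m in auto)
      finally have a: "\<bar>exp (-(\<eta>' * x)) - exp (-(\<eta> * x)) + (\<eta>' * x - \<eta> * x) * exp (-(\<eta> * x))\<bar>
            \<le> (\<eta>' - \<eta>)^2 / m * x" by simp
      have "\<bar>(1 - exp (-(\<eta>' * x))) * N t x - (1 - exp (-(\<eta> * x))) * N t x - (\<eta>' - \<eta>) * (x * exp (-(\<eta> * x)) * N t x)\<bar>
          = \<bar>exp (-(\<eta>' * x)) - exp (-(\<eta> * x)) + (\<eta>' * x - \<eta> * x) * exp (-(\<eta> * x))\<bar> * N t x"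
      proof -
        have "(1 - exp (-(\<eta>' * x))) * N t x - (1 - exp (-(\<eta> * x))) * N t x - (\<eta>' - \<eta>) * (x * exp (-(\<eta> * x)) * N t x)
            = - ((exp (-(\<eta>' * x)) - exp (-(\<eta> * x)) + (\<eta>' * x - \<eta> * x) * exp (-(\<eta> * x))) * N t x)"
          by (simp add: algebra_simps)
        thus ?thesis using N_nonneg[OF t] by (simp add: abs_mult)
      qed
      also have "\<dots> \<le> (\<eta>' - \<eta>)^2 / m * x * N t x" using a N_nonneg[OF t] by (rule mult_right_mono)
      finally show ?thesis by (simp add: mult.assoc)
    qed (simp add: N_zero)
  qed
  also have "\<dots> = (\<eta>' - \<eta>)^2 / m" using N_M1[OF t] by simp
  finally show ?thesis .
qed

lemma F_deriv:
  assumes t: "t \<ge> 0" and e: "\<eta> > 0"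
  shows "(F t has_real_derivative P t \<eta>) (at \<eta>)"
proof (rule quad_deriv[where \<delta>="\<eta>/2" and K="2/\<eta>"])
  show "\<eta> / 2 > 0" using e by simp
  fix s assume s: "\<bar>s - \<eta>\<bar> < \<eta> / 2"
  have "-(s - \<eta>) \<le> \<bar>s - \<eta>\<bar>" by (rule abs_ge_minus_self)
  hence m: "\<eta> / 2 > 0" "\<eta> \<ge> \<eta> / 2" "s \<ge> \<eta> / 2" using e s by linarith+
  have "\<bar>F t s - F t \<eta> - (s - \<eta>) * P t \<eta>\<bar> \<le> (s - \<eta>)^2 / (\<eta> / 2)"
    by (rule F_taylor[OF t m])
  thus "\<bar>F t s - F t \<eta> - (s - \<eta>) * P t \<eta>\<bar> \<le> 2 / \<eta> * (s - \<eta>)^2" by (simp add: ac_simps)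
qed

end

lemma phi_lip:
  fixes \<eta> x z :: real
  assumes e: "\<eta> \<ge> 0" and xz: "x \<ge> 0" "z \<ge> 0"
  shows "\<bar>(1 - exp (-(\<eta> * x))) - (1 - exp (-(\<eta> * z)))\<bar> \<le> \<eta> * \<bar>x - z\<bar>"
proof -
  have "\<bar>exp (-(\<eta> * z)) - exp (-(\<eta> * x))\<bar> \<le> \<bar>\<eta> * z - \<eta> * x\<bar> * exp (- min (\<eta> * z) (\<eta> * x))"
    by (rule exp_diff_le)
  also have "\<dots> \<le> \<bar>\<eta> * z - \<eta> * x\<bar> * 1"
    by (rule mult_left_mono) (use e xz in \<open>auto simp: min_def\<close>)
  also have "\<dots> = \<eta> * \<bar>x - z\<bar>"
  proof -
    have "\<eta> * z - \<eta> * x = \<eta> * (z - x)" by (simp add: right_diff_distrib)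
    thus ?thesis using e by (simp add: abs_mult abs_minus_commute[of z x])
  qed
  finally show ?thesis by simp
qed

lemma psi_lip_le:
  fixes \<eta> x z :: real
  assumes e: "\<eta> > 0" and xz: "0 \<le> z" "z \<le> x"
  shows "\<bar>x * exp (-(\<eta> * x)) - z * exp (-(\<eta> * z))\<bar> \<le> \<bar>x - z\<bar>"
proof -
  have A0: "0 \<le> (x - z) * exp (-(\<eta> * x))" using xz by simp
  have A1: "(x - z) * exp (-(\<eta> * x)) \<le> (x - z) * 1"
    by (rule mult_left_mono) (use xz e in auto)
  have ex: "exp (-(\<eta> * x)) \<le> exp (-(\<eta> * z))"
  proof -
    have "\<eta> * z \<le> \<eta> * x" by (rule mult_left_mono) (use xz e in auto)
    thus ?thesis by simp
  qed
  have B0: "z * (exp (-(\<eta> * x)) - exp (-(\<eta> * z))) \<le> 0"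
    using ex xz by (simp add: mult_nonneg_nonpos)
  have d: "\<bar>exp (-(\<eta> * z)) - exp (-(\<eta> * x))\<bar> \<le> \<bar>\<eta> * z - \<eta> * x\<bar> * exp (- min (\<eta> * z) (\<eta> * x))"
    by (rule exp_diff_le)
  have mn: "min (\<eta> * z) (\<eta> * x) = \<eta> * z"
  proof -
    have "\<eta> * z \<le> \<eta> * x" by (rule mult_left_mono) (use xz e in auto)
    thus ?thesis by simp
  qed
  have ab: "\<bar>\<eta> * z - \<eta> * x\<bar> = \<eta> * (x - z)"
  proof -
    have "\<eta> * z - \<eta> * x = -(\<eta> * (x - z))" by (simp add: right_diff_distrib)
    thus ?thesis using e xz by (simp add: abs_mult)
  qed
  have d2: "exp (-(\<eta> * z)) - exp (-(\<eta> * x)) \<le> \<eta> * (x - z) * exp (-(\<eta> * z))"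
    using d ex by (simp add: mn ab)
  have zb: "z * exp (-(\<eta> * z)) \<le> 1 / \<eta>" using xexp_le[of z \<eta>] xz e by simp
  have "z * (exp (-(\<eta> * z)) - exp (-(\<eta> * x))) \<le> z * (\<eta> * (x - z) * exp (-(\<eta> * z)))"
    by (rule mult_left_mono[OF d2]) (use xz in auto)
  also have "\<dots> = (\<eta> * (x - z)) * (z * exp (-(\<eta> * z)))" by (simp add: ac_simps)
  also have "\<dots> \<le> (\<eta> * (x - z)) * (1 / \<eta>)"
    by (rule mult_left_mono[OF zb]) (use xz e in auto)
  also have "\<dots> = x - z" using e by simp
  finally have B1: "z * (exp (-(\<eta> * z)) - exp (-(\<eta> * x))) \<le> x - z" .
  have eq: "x * exp (-(\<eta> * x)) - z * exp (-(\<eta> * z)) = (x - z) * exp (-(\<eta> * x)) + z * (exp (-(\<eta> * x)) - exp (-(\<eta> * z)))"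
    by (simp add: algebra_simps)
  have "z * (exp (-(\<eta> * x)) - exp (-(\<eta> * z))) = - (z * (exp (-(\<eta> * z)) - exp (-(\<eta> * x))))"
    by (simp add: algebra_simps)
  hence B1': "-(x - z) \<le> z * (exp (-(\<eta> * x)) - exp (-(\<eta> * z)))" using B1 by linarith
  have xzabs: "\<bar>x - z\<bar> = x - z" using xz by simp
  have A1': "(x - z) * exp (-(\<eta> * x)) \<le> x - z" using A1 by simp
  define a where "a = (x - z) * exp (-(\<eta> * x))"
  define b where "b = z * (exp (-(\<eta> * x)) - exp (-(\<eta> * z)))"
  have "\<bar>a + b\<bar> \<le> x - z" using A0 A1' B0 B1' unfolding a_def[symmetric] b_def[symmetric] by linarith
  thus ?thesis unfolding eq xzabs a_def b_def .
qed

lemma psi_lip: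
  fixes \<eta> x z :: real
  assumes e: "\<eta> > 0" and xz: "0 \<le> x" "0 \<le> z"
  shows "\<bar>x * exp (-(\<eta> * x)) - z * exp (-(\<eta> * z))\<bar> \<le> 1 * \<bar>x - z\<bar>"
proof (cases "z \<le> x")
  case True thus ?thesis using psi_lip_le[OF e xz(2) True] by simp
next
  case False
  hence "\<bar>z * exp (-(\<eta> * z)) - x * exp (-(\<eta> * x))\<bar> \<le> \<bar>z - x\<bar>" using psi_lip_le[OF e xz(1)] by simp
  thus ?thesis by (simp add: abs_minus_commute)
qed

context sol begin

definition "Cf s \<eta> = -(1 - P s \<eta>) * F s \<eta>"

lemma phi_weak:
  assumes t: "t \<ge> 0" and e: "\<eta> > 0"
  shows "set_integrable lborel {0..t} (\<lambda>s. CO s (\<lambda>x. 1 - exp (-(\<eta> * x)))) \<and>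
    F t \<eta> = F 0 \<eta> + (LINT s:{0..t}|lborel. CO s (\<lambda>x. 1 - exp (-(\<eta> * x))))"
proof -
  have "set_integrable lborel {0..t} (\<lambda>s. CO s (\<lambda>x. 1 - exp (-(\<eta> * x)))) \<and>
    integral\<^sup>L lborel (\<lambda>x. (1 - exp (-(\<eta> * x))) * N t x) = integral\<^sup>L lborel (\<lambda>x. (1 - exp (-(\<eta> * x))) * N 0 x)
     + (LINT s:{0..t}|lborel. CO s (\<lambda>x. 1 - exp (-(\<eta> * x))))"
  proof (rule weak_ext[OF t, where B=1 and L=\<eta>])
    show "continuous_on UNIV (\<lambda>x. 1 - exp (-(\<eta> * x)))" by (intro continuous_intros)
    show "1 - exp (-(\<eta> * 0)) = 0" by simp
    show "0 \<le> 1 - exp (-(\<eta> * x))" if "x \<ge> 0" for x using one_minus_exp_bounds[of "\<eta> * x"] that e by simp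
    show "1 - exp (-(\<eta> * x)) \<le> 1" for x by simp
    show "\<bar>(1 - exp (-(\<eta> * x))) - (1 - exp (-(\<eta> * z)))\<bar> \<le> \<eta> * \<bar>x - z\<bar>" if "x \<ge> 0" "z \<ge> 0" for x z
      using phi_lip[of \<eta> x z] that e by simp
    show "\<eta> \<ge> 0" using e by simp
  qed
  thus ?thesis by (simp add: FL_def)
qed

lemma psi_weak:
  assumes t: "t \<ge> 0" and e: "\<eta> > 0"
  shows "set_integrable lborel {0..t} (\<lambda>s. CO s (\<lambda>x. x * exp (-(\<eta> * x)))) \<and>
    P t \<eta> = P 0 \<eta> + (LINT s:{0..t}|lborel. CO s (\<lambda>x. x * exp (-(\<eta> * x))))"
proof -
  have "set_integrable lborel {0..t} (\<lambda>s. CO s (\<lambda>x. x * exp (-(\<eta> * x)))) \<and>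
    integral\<^sup>L lborel (\<lambda>x. (x * exp (-(\<eta> * x))) * N t x) = integral\<^sup>L lborel (\<lambda>x. (x * exp (-(\<eta> * x))) * N 0 x)
     + (LINT s:{0..t}|lborel. CO s (\<lambda>x. x * exp (-(\<eta> * x))))"
  proof (rule weak_ext[OF t, where B="1/\<eta>" and L=1])
    show "continuous_on UNIV (\<lambda>x. x * exp (-(\<eta> * x)))" by (intro continuous_intros)
    show "0 * exp (-(\<eta> * 0)) = 0" by simp
    show "0 \<le> x * exp (-(\<eta> * x))" if "x \<ge> 0" for x using that by simp
    show "x * exp (-(\<eta> * x)) \<le> 1 / \<eta>" if "x \<ge> 0" for x using xexp_le[of x \<eta>] that e by simp
    show "\<bar>x * exp (-(\<eta> * x)) - z * exp (-(\<eta> * z))\<bar> \<le> 1 * \<bar>x - z\<bar>" if "x \<ge> 0" "z \<ge> 0" for x z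
      using psi_lip[OF e that] by simp
  qed simp
  thus ?thesis by (simp add: PL_def)
qed

lemma time_lip_gen:
  fixes g :: "real \<Rightarrow> real" and A :: "real \<Rightarrow> real"
  assumes t: "t \<ge> 0" and r: "r \<ge> 0"
    and it: "set_integrable lborel {0..t} g" and ir: "set_integrable lborel {0..r} g"
    and eqt: "A t = A0 + (LINT s:{0..t}|lborel. g s)" and eqr: "A r = A0 + (LINT s:{0..r}|lborel. g s)"
    and b: "\<And>s. s \<ge> 0 \<Longrightarrow> \<bar>g s\<bar> \<le> M"
  shows "\<bar>A t - A r\<bar> \<le> M * \<bar>t - r\<bar>"
proof -
  have "\<bar>(LINT s:{0..t}|lborel. g s) - (LINT s:{0..r}|lborel. g s) - (t - r) * 0\<bar> \<le> M * \<bar>t - r\<bar>"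
    by (rule int_diff_bound[OF r t it ir]) (use b r t in \<open>auto simp: min_def split: if_splits\<close>)
  thus ?thesis using eqt eqr by simp
qed

lemma F_time:
  assumes t: "t \<ge> 0" and r: "r \<ge> 0" and e: "\<eta> > 0"
  shows "\<bar>F t \<eta> - F r \<eta>\<bar> \<le> 2 * \<eta> * \<bar>t - r\<bar>"
proof (rule time_lip_gen[OF t r])
  show "set_integrable lborel {0..t} (\<lambda>s. CO s (\<lambda>x. 1 - exp (-(\<eta> * x))))" using phi_weak[OF t e] by blast
  show "set_integrable lborel {0..r} (\<lambda>s. CO s (\<lambda>x. 1 - exp (-(\<eta> * x))))" using phi_weak[OF r e] by blast
  show "F t \<eta> = F 0 \<eta> + (LINT s:{0..t}|lborel. CO s (\<lambda>x. 1 - exp (-(\<eta> * x))))" using phi_weak[OF t e] by blast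
  show "F r \<eta> = F 0 \<eta> + (LINT s:{0..r}|lborel. CO s (\<lambda>x. 1 - exp (-(\<eta> * x))))" using phi_weak[OF r e] by blast
  fix s :: real assume s: "s \<ge> 0"
  show "\<bar>CO s (\<lambda>x. 1 - exp (-(\<eta> * x)))\<bar> \<le> 2 * \<eta>"
    by (rule coag_bound[OF s]) (use phi_lip e in auto)
qed

lemma P_time:
  assumes t: "t \<ge> 0" and r: "r \<ge> 0" and e: "\<eta> > 0"
  shows "\<bar>P t \<eta> - P r \<eta>\<bar> \<le> 2 * 1 * \<bar>t - r\<bar>"
proof (rule time_lip_gen[OF t r])
  show "set_integrable lborel {0..t} (\<lambda>s. CO s (\<lambda>x. x * exp (-(\<eta> * x))))" using psi_weak[OF t e] by blast
  show "set_integrable lborel {0..r} (\<lambda>s. CO s (\<lambda>x. x * exp (-(\<eta> * x))))" using psi_weak[OF r e] by blast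
  show "P t \<eta> = P 0 \<eta> + (LINT s:{0..t}|lborel. CO s (\<lambda>x. x * exp (-(\<eta> * x))))" using psi_weak[OF t e] by blast
  show "P r \<eta> = P 0 \<eta> + (LINT s:{0..r}|lborel. CO s (\<lambda>x. x * exp (-(\<eta> * x))))" using psi_weak[OF r e] by blast
  fix s :: real assume s: "s \<ge> 0"
  show "\<bar>CO s (\<lambda>x. x * exp (-(\<eta> * x)))\<bar> \<le> 2 * 1"
    by (rule coag_bound[OF s]) (use psi_lip e in auto)
qed


lemma coag_phi:
  assumes s: "s \<ge> 0" and e: "\<eta> > 0"
  shows "CO s (\<lambda>x. 1 - exp (-(\<eta> * x))) = Cf s \<eta>"
proof -
  define \<phi> where "\<phi> x = 1 - exp (-(\<eta> * x))" for x
  define Q where "Q = 1 - P s \<eta>"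
  have e0: "\<eta> \<ge> 0" using e by simp
  have D\<phi>: "\<phi> (x + y) - \<phi> x - \<phi> y = -(\<phi> x * \<phi> y)" for x y
  proof -
    have "exp (-(\<eta> * (x + y))) = exp (-(\<eta> * x)) * exp (-(\<eta> * y))"
      by (simp add: distrib_left flip: exp_add)
    thus ?thesis unfolding \<phi>_def by (simp add: algebra_simps)
  qed
  have I1: "integrable lborel (\<lambda>y. \<phi> y * N s y)" unfolding \<phi>_def by (rule F_int[OF s e0])
  have yeq: "y * \<phi> y * N s y = y * N s y - y * exp (-(\<eta> * y)) * N s y" for y
    by (simp add: \<phi>_def algebra_simps)
  have I2: "integrable lborel (\<lambda>y. y * \<phi> y * N s y)"
    unfolding yeq by (rule Bochner_Integration.integrable_diff[OF N_int1[OF s] P_int[OF s e0]])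
  have Qeq: "integral\<^sup>L lborel (\<lambda>y. y * \<phi> y * N s y) = Q"
    unfolding yeq Q_def Bochner_Integration.integral_diff[OF N_int1[OF s] P_int[OF s e0]] PL_def N_M1[OF s] ..
  have Feq: "integral\<^sup>L lborel (\<lambda>y. \<phi> y * N s y) = F s \<eta>" unfolding \<phi>_def FL_def ..
  have inner: "integral\<^sup>L lborel (\<lambda>y. (x + y) * (\<phi> (x + y) - \<phi> x - \<phi> y) * N s x * N s y)
      = -(\<phi> x * N s x) * (x * F s \<eta> + Q)" for x
  proof -
    have "(\<lambda>y. (x + y) * (\<phi> (x + y) - \<phi> x - \<phi> y) * N s x * N s y)
        = (\<lambda>y. -(\<phi> x * N s x) * (x * (\<phi> y * N s y) + y * \<phi> y * N s y))"
      unfolding D\<phi> by (simp add: fun_eq_iff algebra_simps)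
    hence "integral\<^sup>L lborel (\<lambda>y. (x + y) * (\<phi> (x + y) - \<phi> x - \<phi> y) * N s x * N s y)
        = -(\<phi> x * N s x) * integral\<^sup>L lborel (\<lambda>y. x * (\<phi> y * N s y) + y * \<phi> y * N s y)"
      by simp
    also have "integral\<^sup>L lborel (\<lambda>y. x * (\<phi> y * N s y) + y * \<phi> y * N s y)
        = x * integral\<^sup>L lborel (\<lambda>y. \<phi> y * N s y) + integral\<^sup>L lborel (\<lambda>y. y * \<phi> y * N s y)"
      using I1 I2 by simp
    finally show ?thesis unfolding Qeq Feq .
  qed
  have I3: "integrable lborel (\<lambda>x. x * \<phi> x * N s x)" using I2 .
  have outer: "integral\<^sup>L lborel (\<lambda>x. -(\<phi> x * N s x) * (x * F s \<eta> + Q)) = -(2 * Q * F s \<eta>)"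
  proof -
    have "(\<lambda>x. -(\<phi> x * N s x) * (x * F s \<eta> + Q)) = (\<lambda>x. -(F s \<eta> * (x * \<phi> x * N s x) + Q * (\<phi> x * N s x)))"
      by (simp add: fun_eq_iff algebra_simps)
    hence "integral\<^sup>L lborel (\<lambda>x. -(\<phi> x * N s x) * (x * F s \<eta> + Q))
        = -(F s \<eta> * integral\<^sup>L lborel (\<lambda>x. x * \<phi> x * N s x) + Q * integral\<^sup>L lborel (\<lambda>x. \<phi> x * N s x))"
      using I1 I3 by simp
    thus ?thesis unfolding Qeq Feq by simp
  qed
  have "CO s \<phi> = 1/2 * (-(2 * Q * F s \<eta>))"
    unfolding coag_alt inner outer ..
  also have "\<dots> = Cf s \<eta>" by (simp add: Cf_def Q_def algebra_simps)
  finally show ?thesis by (simp add: \<phi>_def[abs_def])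
qed

lemma F_evol:
  assumes t: "t \<ge> 0" and e: "\<eta> > 0"
  shows "set_integrable lborel {0..t} (\<lambda>s. Cf s \<eta>) \<and> F t \<eta> = F 0 \<eta> + (LINT s:{0..t}|lborel. Cf s \<eta>)"
proof -
  have eq: "\<And>s. s \<in> {0..t} \<Longrightarrow> CO s (\<lambda>x. 1 - exp (-(\<eta> * x))) = Cf s \<eta>"
    using coag_phi e by auto
  have "set_integrable lborel {0..t} (\<lambda>s. CO s (\<lambda>x. 1 - exp (-(\<eta> * x)))) = set_integrable lborel {0..t} (\<lambda>s. Cf s \<eta>)"
    by (rule set_integrable_cong) (use eq in auto)
  moreover have "(LINT s:{0..t}|lborel. CO s (\<lambda>x. 1 - exp (-(\<eta> * x)))) = (LINT s:{0..t}|lborel. Cf s \<eta>)"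
    by (rule set_lebesgue_integral_cong) (use eq in auto)
  ultimately show ?thesis using phi_weak[OF t e] by simp
qed

end

context sol begin

lemma C_est:
  assumes r: "r \<ge> 0" and t: "t \<ge> 0" and m: "m > 0"
    and e1: "m \<le> \<eta>1" "\<eta>1 \<le> X" and e0: "m \<le> \<eta>0" "\<eta>0 \<le> X"
  shows "\<bar>Cf r \<eta>1 - Cf t \<eta>0\<bar> \<le> (2 + X / m + 6 * X) * (\<bar>r - t\<bar> + \<bar>\<eta>1 - \<eta>0\<bar>)"
proof -
  have p1: "\<eta>1 > 0" "\<eta>0 > 0" using m e1 e0 by auto
  have X0: "X \<ge> 0" using p1 e1 by simp
  have Fd: "\<bar>F r \<eta>1 - F t \<eta>0\<bar> \<le> \<bar>\<eta>1 - \<eta>0\<bar> + 2 * \<eta>0 * \<bar>r - t\<bar>"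
  proof -
    have "\<bar>F r \<eta>1 - F r \<eta>0\<bar> \<le> \<bar>\<eta>1 - \<eta>0\<bar>" using F_lip[OF r] p1 by simp
    moreover have "\<bar>F r \<eta>0 - F t \<eta>0\<bar> \<le> 2 * \<eta>0 * \<bar>r - t\<bar>" using F_time[OF r t p1(2)] .
    ultimately show ?thesis by linarith
  qed
  have Pd: "\<bar>P r \<eta>1 - P t \<eta>0\<bar> \<le> \<bar>\<eta>1 - \<eta>0\<bar> / m + 2 * \<bar>r - t\<bar>"
  proof -
    have "\<bar>P r \<eta>1 - P r \<eta>0\<bar> \<le> \<bar>\<eta>1 - \<eta>0\<bar> / m" using P_lip[OF r m e1(1) e0(1)] .
    moreover have "\<bar>P r \<eta>0 - P t \<eta>0\<bar> \<le> 2 * 1 * \<bar>r - t\<bar>" using P_time[OF r t p1(2)] .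
    ultimately show ?thesis by linarith
  qed
  have Fb: "0 \<le> F r \<eta>1" "F r \<eta>1 \<le> \<eta>1" using F_bounds[OF r] p1 by auto
  have Pb: "0 \<le> P t \<eta>0" "P t \<eta>0 \<le> 1" using P_bounds[OF t] p1 by auto
  have eq: "Cf r \<eta>1 - Cf t \<eta>0 = (F t \<eta>0 - F r \<eta>1) + ((P r \<eta>1 - P t \<eta>0) * F r \<eta>1 + P t \<eta>0 * (F r \<eta>1 - F t \<eta>0))"
    by (simp add: Cf_def algebra_simps)
  have a1: "\<bar>(P r \<eta>1 - P t \<eta>0) * F r \<eta>1\<bar> \<le> (\<bar>\<eta>1 - \<eta>0\<bar> / m + 2 * \<bar>r - t\<bar>) * X"
  proof -
    have "\<bar>(P r \<eta>1 - P t \<eta>0) * F r \<eta>1\<bar> = \<bar>P r \<eta>1 - P t \<eta>0\<bar> * F r \<eta>1" using Fb by (simp add: abs_mult)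
    also have "\<dots> \<le> (\<bar>\<eta>1 - \<eta>0\<bar> / m + 2 * \<bar>r - t\<bar>) * X"
      by (rule mult_mono[OF Pd]) (use Fb e1 m in auto)
    finally show ?thesis .
  qed
  have a2: "\<bar>P t \<eta>0 * (F r \<eta>1 - F t \<eta>0)\<bar> \<le> 1 * (\<bar>\<eta>1 - \<eta>0\<bar> + 2 * \<eta>0 * \<bar>r - t\<bar>)"
  proof -
    have "\<bar>P t \<eta>0 * (F r \<eta>1 - F t \<eta>0)\<bar> = P t \<eta>0 * \<bar>F r \<eta>1 - F t \<eta>0\<bar>" using Pb by (simp add: abs_mult)
    also have "\<dots> \<le> 1 * (\<bar>\<eta>1 - \<eta>0\<bar> + 2 * \<eta>0 * \<bar>r - t\<bar>)"
      by (rule mult_mono[OF Pb(2) Fd]) auto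
    finally show ?thesis .
  qed
  have a3: "\<bar>F t \<eta>0 - F r \<eta>1\<bar> \<le> \<bar>\<eta>1 - \<eta>0\<bar> + 2 * \<eta>0 * \<bar>r - t\<bar>"
    using Fd by (simp add: abs_minus_commute)
  have b1: "2 * \<eta>0 * \<bar>r - t\<bar> \<le> 2 * X * \<bar>r - t\<bar>"
    by (rule mult_right_mono) (use e0 in auto)
  have "\<bar>Cf r \<eta>1 - Cf t \<eta>0\<bar> \<le> 2 * (\<bar>\<eta>1 - \<eta>0\<bar> + 2 * X * \<bar>r - t\<bar>) + (\<bar>\<eta>1 - \<eta>0\<bar> / m + 2 * \<bar>r - t\<bar>) * X"
  proof -
    have "\<bar>(F t \<eta>0 - F r \<eta>1) + ((P r \<eta>1 - P t \<eta>0) * F r \<eta>1 + P t \<eta>0 * (F r \<eta>1 - F t \<eta>0))\<bar>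
        \<le> \<bar>F t \<eta>0 - F r \<eta>1\<bar> + (\<bar>(P r \<eta>1 - P t \<eta>0) * F r \<eta>1\<bar> + \<bar>P t \<eta>0 * (F r \<eta>1 - F t \<eta>0)\<bar>)"
      by (rule order_trans[OF abs_triangle_ineq add_left_mono[OF abs_triangle_ineq]])
    also have "\<dots> \<le> (\<bar>\<eta>1 - \<eta>0\<bar> + 2 * \<eta>0 * \<bar>r - t\<bar>) + ((\<bar>\<eta>1 - \<eta>0\<bar> / m + 2 * \<bar>r - t\<bar>) * X + 1 * (\<bar>\<eta>1 - \<eta>0\<bar> + 2 * \<eta>0 * \<bar>r - t\<bar>))"
      by (rule add_mono[OF a3 add_mono[OF a1 a2]])
    also have "\<dots> \<le> 2 * (\<bar>\<eta>1 - \<eta>0\<bar> + 2 * X * \<bar>r - t\<bar>) + (\<bar>\<eta>1 - \<eta>0\<bar> / m + 2 * \<bar>r - t\<bar>) * X"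
    proof -
      define A where "A = \<bar>\<eta>1 - \<eta>0\<bar>"
      define Bv where "Bv = 2 * \<eta>0 * \<bar>r - t\<bar>"
      define Cv where "Cv = 2 * X * \<bar>r - t\<bar>"
      define W where "W = (\<bar>\<eta>1 - \<eta>0\<bar> / m + 2 * \<bar>r - t\<bar>) * X"
      have "Bv \<le> Cv" using b1 by (simp add: Bv_def Cv_def)
      hence "A + Bv + (W + 1 * (A + Bv)) \<le> 2 * (A + Cv) + W" by (simp add: algebra_simps)
      thus ?thesis by (simp add: A_def Bv_def Cv_def W_def)
    qed
    finally show ?thesis unfolding eq .
  qed
  also have "\<dots> = (2 + X / m) * \<bar>\<eta>1 - \<eta>0\<bar> + 6 * X * \<bar>r - t\<bar>"
    by (simp add: algebra_simps)
  also have "\<dots> \<le> (2 + X / m + 6 * X) * (\<bar>r - t\<bar> + \<bar>\<eta>1 - \<eta>0\<bar>)"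
  proof -
    have "0 \<le> X / m" using X0 m by simp
    hence "(2 + X / m) * \<bar>\<eta>1 - \<eta>0\<bar> \<le> (2 + X / m + 6 * X) * \<bar>\<eta>1 - \<eta>0\<bar>"
      using X0 by (intro mult_right_mono) auto
    moreover have "6 * X * \<bar>r - t\<bar> \<le> (2 + X / m + 6 * X) * \<bar>r - t\<bar>"
      using X0 \<open>0 \<le> X / m\<close> by (intro mult_right_mono) auto
    ultimately show ?thesis by (simp add: distrib_left)
  qed
  finally show ?thesis .
qed


lemma sq_le_of_abs_le: "\<bar>a::real\<bar> \<le> b \<Longrightarrow> a^2 \<le> b^2"
proof -
  assume h: "\<bar>a\<bar> \<le> b"
  have "\<bar>a\<bar>^2 \<le> b^2" by (rule power_mono[OF h abs_ge_zero])
  thus ?thesis by simp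
qed

lemma char_formula:
  assumes xi: "\<xi> > 0" and T: "T \<ge> 0"
  shows "F T (\<xi> - (1 - exp (-T)) * F 0 \<xi>) = exp (-T) * F 0 \<xi>"
proof -
  define F0 where "F0 = F 0 \<xi>"
  have F0b: "0 \<le> F0" "F0 \<le> \<xi>" using F_bounds[of 0 \<xi>] xi by (auto simp: F0_def)
  define \<eta>c where "\<eta>c s = \<xi> - (1 - exp (-s)) * F0" for s
  have \<eta>low: "\<xi> * exp (-s) \<le> \<eta>c s" if "s \<ge> 0" for s
  proof -
    have "0 \<le> (\<xi> - F0) * (1 - exp (-s))" using F0b that by simp
    thus ?thesis by (simp add: \<eta>c_def algebra_simps)
  qed
  have \<eta>up: "\<eta>c s \<le> \<xi>" if "s \<ge> 0" for s
    using F0b that by (simp add: \<eta>c_def)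
  have \<eta>pos: "\<eta>c s > 0" if "s \<ge> 0" for s
  proof -
    have "0 < \<xi> * exp (-s)" using xi by simp
    thus ?thesis using \<eta>low[OF that] by linarith
  qed
  have \<eta>diff: "\<bar>\<eta>c s - \<eta>c t\<bar> \<le> F0 * \<bar>s - t\<bar>" if "s \<ge> 0" "t \<ge> 0" for s t
  proof -
    have "\<eta>c s - \<eta>c t = F0 * (exp (-s) - exp (-t))" by (simp add: \<eta>c_def algebra_simps)
    moreover have "\<bar>exp (-s) - exp (-t)\<bar> \<le> \<bar>s - t\<bar>"
    proof -
      have "\<bar>exp (-s) - exp (-t)\<bar> \<le> \<bar>s - t\<bar> * exp (- min s t)" by (rule exp_diff_le)
      also have "\<dots> \<le> \<bar>s - t\<bar> * 1" by (rule mult_left_mono) (use that in auto)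
      finally show ?thesis by simp
    qed
    ultimately show ?thesis using F0b by (simp add: abs_mult mult_left_mono)
  qed
  have \<eta>quad: "\<bar>\<eta>c s - \<eta>c t - (s - t) * (-(exp (-t) * F0))\<bar> \<le> F0 * (s - t)^2" if "s \<ge> 0" "t \<ge> 0" for s t
  proof -
    have "\<eta>c s - \<eta>c t - (s - t) * (-(exp (-t) * F0)) = F0 * (exp (-s) - exp (-t) + (s - t) * exp (-t))"
      by (simp add: \<eta>c_def algebra_simps)
    moreover have "\<bar>exp (-s) - exp (-t) + (s - t) * exp (-t)\<bar> \<le> (s - t)^2"
    proof -
      have "\<bar>exp (-s) - exp (-t) + (s - t) * exp (-t)\<bar> \<le> (s - t)^2 * exp (- min t s)" by (rule exp_quad_err)
      also have "\<dots> \<le> (s - t)^2 * 1" by (rule mult_left_mono) (use that in auto)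
      finally show ?thesis by simp
    qed
    ultimately show ?thesis using F0b by (simp add: abs_mult mult_left_mono)
  qed
  define h where "h s = F s (\<eta>c s)" for s
  define u where "u s = h s - exp (-s) * F0" for s
  have hderiv: "(h has_real_derivative (Cf t (\<eta>c t) + P t (\<eta>c t) * (-(exp (-t) * F0)))) (at t)" if t: "t > 0" for t
  proof -
    define m where "m = \<xi> * exp (-(t + 1))"
    have m: "m > 0" using xi by (simp add: m_def)
    define K0 where "K0 = 2 + \<xi> / m + 6 * \<xi>"
    have K0: "K0 \<ge> 0" using xi m by (simp add: K0_def)
    show ?thesis
    proof (rule quad_deriv[where \<delta>="min t 1" and K="K0 * (1 + F0) + F0^2 / m + F0"])
      show "min t 1 > 0" using t by simp
      fix s assume st: "\<bar>s - t\<bar> < min t 1"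
      have s0: "s \<ge> 0" "s \<le> t + 1" using st by (auto simp: abs_less_iff)
      have t0: "t \<ge> 0" using t by simp
      have ms: "m \<le> \<eta>c s"
      proof -
        have "m \<le> \<xi> * exp (-s)" unfolding m_def using xi s0 by (intro mult_left_mono) auto
        thus ?thesis using \<eta>low[OF s0(1)] by linarith
      qed
      have mt: "m \<le> \<eta>c t"
      proof -
        have "m \<le> \<xi> * exp (-t)" unfolding m_def using xi t by (intro mult_left_mono) auto
        thus ?thesis using \<eta>low[OF t0] by linarith
      qed
      have ds: "\<bar>\<eta>c s - \<eta>c t\<bar> \<le> F0 * \<bar>s - t\<bar>" by (rule \<eta>diff[OF s0(1) t0])
      define T1 where "T1 = F s (\<eta>c s) - F t (\<eta>c s) - (s - t) * Cf t (\<eta>c t)"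
      define T2 where "T2 = F t (\<eta>c s) - F t (\<eta>c t) - (\<eta>c s - \<eta>c t) * P t (\<eta>c t)"
      define T3 where "T3 = P t (\<eta>c t) * (\<eta>c s - \<eta>c t - (s - t) * (-(exp (-t) * F0)))"
      have eq: "h s - h t - (s - t) * (Cf t (\<eta>c t) + P t (\<eta>c t) * (-(exp (-t) * F0))) = T1 + T2 + T3"
        by (simp add: h_def T1_def T2_def T3_def algebra_simps)
      have b1: "\<bar>T1\<bar> \<le> K0 * (1 + F0) * (s - t)^2"
      proof -
        have es: "set_integrable lborel {0..s} (\<lambda>r. Cf r (\<eta>c s)) \<and> F s (\<eta>c s) = F 0 (\<eta>c s) + (LINT r:{0..s}|lborel. Cf r (\<eta>c s))"
          by (rule F_evol[OF s0(1) \<eta>pos[OF s0(1)]])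
        have et: "set_integrable lborel {0..t} (\<lambda>r. Cf r (\<eta>c s)) \<and> F t (\<eta>c s) = F 0 (\<eta>c s) + (LINT r:{0..t}|lborel. Cf r (\<eta>c s))"
          by (rule F_evol[OF t0 \<eta>pos[OF s0(1)]])
        have "\<bar>(LINT r:{0..s}|lborel. Cf r (\<eta>c s)) - (LINT r:{0..t}|lborel. Cf r (\<eta>c s)) - (s - t) * Cf t (\<eta>c t)\<bar>
              \<le> (K0 * (\<bar>s - t\<bar> + F0 * \<bar>s - t\<bar>)) * \<bar>s - t\<bar>"
        proof (rule int_diff_bound[OF t0 s0(1)])
          show "set_integrable lborel {0..s} (\<lambda>r. Cf r (\<eta>c s))" using es by blast
          show "set_integrable lborel {0..t} (\<lambda>r. Cf r (\<eta>c s))" using et by blast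
          fix r assume r: "min t s \<le> r" "r \<le> max t s"
          have r0: "r \<ge> 0" using r s0 t0 by (auto simp: min_def split: if_splits)
          have rt: "\<bar>r - t\<bar> \<le> \<bar>s - t\<bar>" using r by (auto simp: min_def max_def split: if_splits)
          have "\<bar>Cf r (\<eta>c s) - Cf t (\<eta>c t)\<bar> \<le> K0 * (\<bar>r - t\<bar> + \<bar>\<eta>c s - \<eta>c t\<bar>)"
            unfolding K0_def by (rule C_est[OF r0 t0 m ms \<eta>up[OF s0(1)] mt \<eta>up[OF t0]])
          also have "\<dots> \<le> K0 * (\<bar>s - t\<bar> + F0 * \<bar>s - t\<bar>)"
            by (rule mult_left_mono[OF _ K0]) (use rt ds in linarith)
          finally show "\<bar>Cf r (\<eta>c s) - Cf t (\<eta>c t)\<bar> \<le> K0 * (\<bar>s - t\<bar> + F0 * \<bar>s - t\<bar>)" .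
        qed
        moreover have "T1 = (LINT r:{0..s}|lborel. Cf r (\<eta>c s)) - (LINT r:{0..t}|lborel. Cf r (\<eta>c s)) - (s - t) * Cf t (\<eta>c t)"
          using es et by (simp add: T1_def)
        moreover have "(K0 * (\<bar>s - t\<bar> + F0 * \<bar>s - t\<bar>)) * \<bar>s - t\<bar> = K0 * (1 + F0) * (s - t)^2"
          by (simp add: power2_eq_square algebra_simps)
        ultimately show ?thesis by simp
      qed
      have b2: "\<bar>T2\<bar> \<le> F0^2 / m * (s - t)^2"
      proof -
        have "\<bar>T2\<bar> \<le> (\<eta>c s - \<eta>c t)^2 / m" unfolding T2_def by (rule F_taylor[OF t0 m mt ms])
        also have "\<dots> \<le> (F0 * \<bar>s - t\<bar>)^2 / m"
          by (rule divide_right_mono[OF sq_le_of_abs_le[OF ds]]) (use m in simp)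
        also have "\<dots> = F0^2 / m * (s - t)^2" by (simp add: power_mult_distrib)
        finally show ?thesis .
      qed
      have b3: "\<bar>T3\<bar> \<le> F0 * (s - t)^2"
      proof -
        have Pb: "0 \<le> P t (\<eta>c t)" "P t (\<eta>c t) \<le> 1" using P_bounds[OF t0] \<eta>pos[OF t0] by auto
        have "\<bar>T3\<bar> = P t (\<eta>c t) * \<bar>\<eta>c s - \<eta>c t - (s - t) * (-(exp (-t) * F0))\<bar>"
          unfolding T3_def using Pb by (simp add: abs_mult)
        also have "\<dots> \<le> 1 * (F0 * (s - t)^2)"
          by (rule mult_mono[OF Pb(2) \<eta>quad[OF s0(1) t0]]) auto
        finally show ?thesis by simp
      qed
      have "\<bar>T1 + T2 + T3\<bar> \<le> \<bar>T1\<bar> + \<bar>T2\<bar> + \<bar>T3\<bar>" by (simp add: abs_triangle_ineq order_trans[OF abs_triangle_ineq])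
      also have "\<dots> \<le> K0 * (1 + F0) * (s - t)^2 + F0^2 / m * (s - t)^2 + F0 * (s - t)^2"
        using b1 b2 b3 by linarith
      also have "\<dots> = (K0 * (1 + F0) + F0^2 / m + F0) * (s - t)^2" by (simp add: algebra_simps)
      finally show "\<bar>h s - h t - (s - t) * (Cf t (\<eta>c t) + P t (\<eta>c t) * (-(exp (-t) * F0)))\<bar>
          \<le> (K0 * (1 + F0) + F0^2 / m + F0) * (s - t)^2" unfolding eq .
    qed
  qed
  have uderiv: "(u has_real_derivative (-(1 - P t (\<eta>c t)) * u t)) (at t)" if t: "t > 0" for t
  proof -
    have "(u has_real_derivative (Cf t (\<eta>c t) + P t (\<eta>c t) * (-(exp (-t) * F0)) - (- exp (-t)) * F0)) (at t)"
      unfolding u_def[abs_def]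
      by (rule derivative_eq_intros hderiv[OF t] refl | simp)+
    moreover have "Cf t (\<eta>c t) + P t (\<eta>c t) * (-(exp (-t) * F0)) - (- exp (-t)) * F0 = -(1 - P t (\<eta>c t)) * u t"
      by (simp add: Cf_def u_def h_def algebra_simps)
    ultimately show ?thesis by simp
  qed
  define v where "v s = (u s)^2" for s
  have vderiv: "\<exists>y. (v has_real_derivative y) (at t) \<and> y \<le> 0" if t: "t > 0" for t
  proof -
    have "(v has_real_derivative (2 * u t * (-(1 - P t (\<eta>c t)) * u t))) (at t)"
      unfolding v_def[abs_def] using DERIV_power[OF uderiv[OF t], of 2] by (simp add: algebra_simps)
    moreover have "2 * u t * (-(1 - P t (\<eta>c t)) * u t) \<le> 0"
    proof -
      have "P t (\<eta>c t) \<le> 1" using P_bounds[of t "\<eta>c t"] t \<eta>pos[of t] by auto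
      hence "0 \<le> 2 * (1 - P t (\<eta>c t)) * (u t * u t)" by simp
      thus ?thesis by (simp add: algebra_simps)
    qed
    ultimately show ?thesis by blast
  qed
  have hlip: "\<bar>h s - h t\<bar> \<le> (2 * \<xi> + F0) * \<bar>s - t\<bar>" if "s \<ge> 0" "t \<ge> 0" for s t
  proof -
    have a: "\<bar>F s (\<eta>c s) - F t (\<eta>c s)\<bar> \<le> 2 * \<eta>c s * \<bar>s - t\<bar>" by (rule F_time[OF that \<eta>pos[OF that(1)]])
    have a': "2 * \<eta>c s * \<bar>s - t\<bar> \<le> 2 * \<xi> * \<bar>s - t\<bar>"
      by (rule mult_right_mono) (use \<eta>up[OF that(1)] in auto)
    have b: "\<bar>F t (\<eta>c s) - F t (\<eta>c t)\<bar> \<le> \<bar>\<eta>c s - \<eta>c t\<bar>"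
      by (rule F_lip[OF that(2)]) (use \<eta>pos that in \<open>auto intro: less_imp_le\<close>)
    have "\<bar>h s - h t\<bar> \<le> \<bar>F s (\<eta>c s) - F t (\<eta>c s)\<bar> + \<bar>F t (\<eta>c s) - F t (\<eta>c t)\<bar>"
      unfolding h_def by (rule order_trans[OF _ abs_triangle_ineq]) simp
    also have "\<dots> \<le> 2 * \<xi> * \<bar>s - t\<bar> + F0 * \<bar>s - t\<bar>" using a a' b \<eta>diff[OF that] by linarith
    also have "\<dots> = (2 * \<xi> + F0) * \<bar>s - t\<bar>" by (simp add: algebra_simps)
    finally show ?thesis .
  qed
  have hcont: "continuous_on {0..T} h"
  proof (rule lipschitz_on_continuous_on)
    show "(2 * \<xi> + F0)-lipschitz_on {0..T} h"
      by (rule lipschitz_onI) (use hlip F0b xi in \<open>auto simp: dist_real_def\<close>)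
  qed
  have vcont: "continuous_on {0..T} v"
    unfolding v_def[abs_def] u_def[abs_def] by (intro continuous_intros hcont)
  have u0: "u 0 = 0" by (simp add: u_def h_def \<eta>c_def F0_def)
  have "v T \<le> v 0"
    by (rule DERIV_nonpos_imp_decreasing_open[OF T _ vcont]) (use vderiv in auto)
  hence "v T = 0" using u0 by (simp add: v_def)
  hence "u T = 0" by (simp add: v_def)
  thus ?thesis by (simp add: u_def h_def \<eta>c_def F0_def)
qed

end

lemma F0_cont:
  assumes "sol n" and c: "0 \<le> c" "c \<le> 1" and that: "0 \<le> a"
  shows "continuous_on {a..b} (\<lambda>\<xi>. \<xi> - c * FL n 0 \<xi>)"
proof -
  interpret sol n by fact
  have "(1 + c)-lipschitz_on {a..b} (\<lambda>\<xi>. \<xi> - c * FL n 0 \<xi>)"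
  proof (rule lipschitz_onI)
    fix x y assume xy: "x \<in> {a..b}" "y \<in> {a..b}"
    have l: "\<bar>FL n 0 x - FL n 0 y\<bar> \<le> \<bar>x - y\<bar>" by (rule F_lip) (use xy that in auto)
    have "\<bar>(x - c * FL n 0 x) - (y - c * FL n 0 y)\<bar> \<le> \<bar>x - y\<bar> + c * \<bar>FL n 0 x - FL n 0 y\<bar>"
    proof -
      have "(x - c * FL n 0 x) - (y - c * FL n 0 y) = (x - y) - c * (FL n 0 x - FL n 0 y)" by (simp add: algebra_simps)
      moreover have "\<bar>c * (FL n 0 x - FL n 0 y)\<bar> = c * \<bar>FL n 0 x - FL n 0 y\<bar>" using c by (simp add: abs_mult)
      ultimately show ?thesis by (metis abs_triangle_ineq4)
    qed
    also have "\<dots> \<le> \<bar>x - y\<bar> + c * \<bar>x - y\<bar>" using l c by (simp add: mult_left_mono)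
    finally show "dist (x - c * FL n 0 x) (y - c * FL n 0 y) \<le> (1 + c) * dist x y"
      by (simp add: dist_real_def algebra_simps)
  qed (use c in simp)
  thus ?thesis by (rule lipschitz_on_continuous_on)
qed

lemma char_solve:
  assumes s: "sol n" and t: "t \<ge> 0" and e: "\<eta> > 0"
  shows "\<exists>b. \<eta> \<le> b \<and> b \<le> \<eta> * exp t \<and> b - (1 - exp (-t)) * FL n 0 b = \<eta> \<and>
             FL n t \<eta> = exp (-t) * FL n 0 b"
proof -
  interpret sol n by fact
  define c where "c = 1 - exp (-t)"
  have c: "0 \<le> c" "c \<le> 1" using t by (auto simp: c_def)
  have lo: "\<eta> - c * FL n 0 \<eta> \<le> \<eta>" using F_bounds[of 0 \<eta>] e c by simp
  have hi: "\<eta> \<le> \<eta> * exp t - c * FL n 0 (\<eta> * exp t)"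
  proof -
    have Fb: "FL n 0 (\<eta> * exp t) \<le> \<eta> * exp t" using F_bounds[of 0 "\<eta> * exp t"] e by simp
    have "c * FL n 0 (\<eta> * exp t) \<le> c * (\<eta> * exp t)" by (rule mult_left_mono[OF Fb c(1)])
    moreover have "\<eta> * exp t - c * (\<eta> * exp t) = \<eta>"
      by (simp add: c_def algebra_simps exp_minus_inverse mult.assoc[symmetric] flip: exp_add)
    ultimately show ?thesis by linarith
  qed
  have le: "\<eta> \<le> \<eta> * exp t" using e t by simp
  obtain b where b: "\<eta> \<le> b" "b \<le> \<eta> * exp t" "b - c * FL n 0 b = \<eta>"
    using IVT'[of "\<lambda>\<xi>. \<xi> - c * FL n 0 \<xi>", OF lo hi le F0_cont[OF s c, of \<eta>]] e by auto
  have "FL n t (b - c * FL n 0 b) = exp (-t) * FL n 0 b"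
    unfolding c_def by (rule char_formula) (use b e t in auto)
  thus ?thesis using b by (auto simp: c_def)
qed

lemma compare:
  assumes s1: "sol n1" and s2: "sol n2" and t: "t \<ge> 0" and e: "\<eta> > 0"
  shows "\<exists>b. \<eta> \<le> b \<and> b \<le> \<eta> * exp t \<and> \<bar>FL n1 t \<eta> - FL n2 t \<eta>\<bar> \<le> \<bar>FL n1 0 b - FL n2 0 b\<bar>"
proof (cases "t = 0")
  case True thus ?thesis using e by (intro exI[of _ \<eta>]) auto
next
  case False
  hence tp: "t > 0" using t by simp
  interpret A: sol n1 by fact
  interpret B: sol n2 by fact
  define c where "c = 1 - exp (-t)"
  have c: "0 < c" "c < 1" using tp by (auto simp: c_def)
  obtain a where a: "\<eta> \<le> a" "a \<le> \<eta> * exp t" "a - c * FL n1 0 a = \<eta>" "FL n1 t \<eta> = exp (-t) * FL n1 0 a"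
    using char_solve[OF s1 t e] by (auto simp: c_def)
  obtain b where b: "\<eta> \<le> b" "b \<le> \<eta> * exp t" "b - c * FL n2 0 b = \<eta>" "FL n2 t \<eta> = exp (-t) * FL n2 0 b"
    using char_solve[OF s2 t e] by (auto simp: c_def)
  define d where "d = a - b"
  define q where "q = FL n1 0 a - FL n1 0 b"
  have a0: "a \<ge> 0" "b \<ge> 0" using a b e by auto
  have qd: "\<bar>q\<bar> \<le> \<bar>d\<bar>" unfolding q_def d_def by (rule A.F_lip[OF _ a0])  simp
  have qsign: "0 \<le> q * d"
  proof (cases "b \<le> a")
    case True
    hence "FL n1 0 b \<le> FL n1 0 a" by (intro A.F_mono) (use a0 in auto)
    thus ?thesis using True by (simp add: q_def d_def)
  next
    case False
    hence "FL n1 0 a \<le> FL n1 0 b" by (intro A.F_mono) (use a0 in auto)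
    thus ?thesis using False by (simp add: q_def d_def mult_nonpos_nonpos)
  qed
  have key: "d - c * q = c * (FL n1 0 b - FL n2 0 b)"
    using a(3) b(3) by (simp add: d_def q_def algebra_simps)
  have low: "(1 - c) * \<bar>d\<bar> \<le> \<bar>d - c * q\<bar>"
  proof (cases "d \<ge> 0")
    case True
    hence "0 \<le> q" "q \<le> d" using qd qsign by (auto simp: zero_le_mult_iff)
    hence "c * q \<le> c * d" "0 \<le> c * q" using c by (auto intro: mult_left_mono)
    thus ?thesis using True by (simp add: algebra_simps)
  next
    case False
    hence "q \<le> 0" "d \<le> q" using qd qsign by (auto simp: zero_le_mult_iff)
    hence "c * d \<le> c * q" "c * q \<le> 0" using c by (auto intro: mult_left_mono simp: mult_nonneg_nonpos)
    thus ?thesis using False by (simp add: algebra_simps)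
  qed
  have diff: "c * (FL n1 0 a - FL n2 0 b) = d" using a(3) b(3) by (simp add: d_def algebra_simps)
  have "c * \<bar>FL n1 t \<eta> - FL n2 t \<eta>\<bar> = exp (-t) * \<bar>d\<bar>"
  proof -
    have "FL n1 t \<eta> - FL n2 t \<eta> = exp (-t) * (FL n1 0 a - FL n2 0 b)" using a(4) b(4) by (simp add: algebra_simps)
    hence "c * \<bar>FL n1 t \<eta> - FL n2 t \<eta>\<bar> = exp (-t) * \<bar>c * (FL n1 0 a - FL n2 0 b)\<bar>"
      using c by (simp add: abs_mult)
    thus ?thesis unfolding diff .
  qed
  also have "\<dots> = (1 - c) * \<bar>d\<bar>" by (simp add: c_def)
  also have "\<dots> \<le> c * \<bar>FL n1 0 b - FL n2 0 b\<bar>" using low key c by (simp add: abs_mult)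
  finally have "\<bar>FL n1 t \<eta> - FL n2 t \<eta>\<bar> \<le> \<bar>FL n1 0 b - FL n2 0 b\<bar>" using c by simp
  thus ?thesis using b by blast
qed

lemma resc_int:
  assumes s1: "sol n1" and s2: "sol n2" and \<tau>: "\<tau> \<ge> 0" and e: "\<eta> > 0"
  shows "(LINT z:{0<..}|lborel. (1 - exp (-(\<eta> * z))) * (rescale n1 \<tau> z - rescale n2 \<tau> z))
       = exp \<tau> * (FL n1 (\<tau>/2) (\<eta> * exp (-\<tau>)) - FL n2 (\<tau>/2) (\<eta> * exp (-\<tau>)))"
proof -
  interpret A: sol n1 by fact
  interpret B: sol n2 by fact
  define \<xi> where "\<xi> = \<eta> * exp (-\<tau>)"
  have \<xi>0: "\<xi> \<ge> 0" using e by (simp add: \<xi>_def)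
  have t2: "\<tau> / 2 \<ge> 0" using \<tau> by simp
  define g where "g x = exp (2 * \<tau>) * ((1 - exp (-(\<xi> * x))) * Nf n1 (\<tau>/2) x - (1 - exp (-(\<xi> * x))) * Nf n2 (\<tau>/2) x)" for x
  have xe: "\<xi> * (exp \<tau> * z) = \<eta> * z" for z
  proof -
    have "\<xi> * (exp \<tau> * z) = \<eta> * z * (exp (-\<tau>) * exp \<tau>)" by (simp add: \<xi>_def ac_simps)
    also have "exp (-\<tau>) * exp \<tau> = 1" by (simp add: exp_minus_inverse mult.commute)
    finally show ?thesis by simp
  qed
  have ind: "indicator {0<..} (exp \<tau> * z) = (indicator {0<..} z :: real)" for z
    by (simp add: indicator_def zero_less_mult_iff)
  have pt: "indicator {0<..} z *\<^sub>R ((1 - exp (-(\<eta> * z))) * (rescale n1 \<tau> z - rescale n2 \<tau> z)) = g (0 + exp \<tau> * z)" for z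
  proof -
    have "g (0 + exp \<tau> * z) = exp (2 * \<tau>) * ((1 - exp (-(\<eta> * z))) * (indicator {0<..} z * n1 (\<tau>/2) (exp \<tau> * z))
        - (1 - exp (-(\<eta> * z))) * (indicator {0<..} z * n2 (\<tau>/2) (exp \<tau> * z)))"
      unfolding g_def Nf_def add_0_left xe ind ..
    thus ?thesis by (simp add: rescale_def algebra_simps)
  qed
  have "integral\<^sup>L lborel g = \<bar>exp \<tau>\<bar> *\<^sub>R integral\<^sup>L lborel (\<lambda>z. g (0 + exp \<tau> * z))"
    by (rule lborel_integral_real_affine) simp
  hence i1: "integral\<^sup>L lborel (\<lambda>z. g (0 + exp \<tau> * z)) = exp (-\<tau>) * integral\<^sup>L lborel g"
    by (simp add: exp_minus_inverse field_simps exp_minus)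
  have i2: "integral\<^sup>L lborel g = exp (2 * \<tau>) * (FL n1 (\<tau>/2) \<xi> - FL n2 (\<tau>/2) \<xi>)"
    unfolding g_def FL_def
    using Bochner_Integration.integral_diff[OF A.F_int[OF t2 \<xi>0] B.F_int[OF t2 \<xi>0]] by simp
  have "(LINT z:{0<..}|lborel. (1 - exp (-(\<eta> * z))) * (rescale n1 \<tau> z - rescale n2 \<tau> z))
      = integral\<^sup>L lborel (\<lambda>z. g (0 + exp \<tau> * z))"
    unfolding set_lebesgue_integral_def pt ..
  also have "\<dots> = exp (-\<tau>) * exp (2 * \<tau>) * (FL n1 (\<tau>/2) \<xi> - FL n2 (\<tau>/2) \<xi>)" unfolding i1 i2 by simp
  also have "exp (-\<tau>) * exp (2 * \<tau>) = exp \<tau>" by (simp flip: exp_add)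
  finally show ?thesis by (simp add: \<xi>_def)
qed

theorem theorem1p3:
  fixes n1 n2 :: "real \<Rightarrow> real \<Rightarrow> real" and \<kappa> \<tau> :: real
  assumes sol1: "smol_solution (\<lambda>x y. x + y) n1" and mc1: "mass_conserving n1"
    and sol2: "smol_solution (\<lambda>x y. x + y) n2" and mc2: "mass_conserving n2"
    and L1_1: "set_integrable lborel {0<..} (n1 0)"
    and L1_2: "set_integrable lborel {0<..} (n2 0)"
    and m1_1: "set_integrable lborel {0<..} (\<lambda>x. x * n1 0 x)"
    and m1_1': "(LINT x:{0<..}|lborel. x * n1 0 x) = 1"
    and m2_1: "set_integrable lborel {0<..} (\<lambda>x. x^2 * n1 0 x)"
    and m2_1': "(LINT x:{0<..}|lborel. x^2 * n1 0 x) = 1"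
    and m3_1: "set_integrable lborel {0<..} (\<lambda>x. x^3 * n1 0 x)"
    and m1_2: "set_integrable lborel {0<..} (\<lambda>x. x * n2 0 x)"
    and m1_2': "(LINT x:{0<..}|lborel. x * n2 0 x) = 1"
    and m2_2: "set_integrable lborel {0<..} (\<lambda>x. x^2 * n2 0 x)"
    and m2_2': "(LINT x:{0<..}|lborel. x^2 * n2 0 x) = 1"
    and m3_2: "set_integrable lborel {0<..} (\<lambda>x. x^3 * n2 0 x)"
    and \<kappa>: "2 < \<kappa>" "\<kappa> < 3"
    and \<tau>: "0 \<le> \<tau>"
  shows "add_norm \<kappa> (\<lambda>z. rescale n1 \<tau> z - rescale n2 \<tau> z)
           \<le> ereal (exp (-(1/2) * (\<kappa> - 2) * \<tau>)) *
              add_norm \<kappa> (\<lambda>z. rescale n1 0 z - rescale n2 0 z)"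
proof -
  have s1: "sol n1" unfolding sol_def using sol1 mc1 m1_1' by blast
  have s2: "sol n2" unfolding sol_def using sol2 mc2 m1_2' by blast
  define D0 where "D0 b = FL n1 0 b - FL n2 0 b" for b
  define A0 where "A0 = add_norm \<kappa> (\<lambda>z. rescale n1 0 z - rescale n2 0 z)"
  define c where "c = exp (-(1/2) * (\<kappa> - 2) * \<tau>)"
  have A0ge: "ereal (b powr -\<kappa> * \<bar>D0 b\<bar>) \<le> A0" if b: "b > 0" for b
  proof -
    have "(LINT z:{0<..}|lborel. (1 - exp (-(b * z))) * (rescale n1 0 z - rescale n2 0 z)) = D0 b"
      using resc_int[OF s1 s2 _ b, of 0] by (simp add: D0_def)
    hence "ereal (b powr -\<kappa> * \<bar>D0 b\<bar>) = ereal (b powr (-\<kappa>) *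
        \<bar>LINT z:{0<..}|lborel. (1 - exp (-(b * z))) * (rescale n1 0 z - rescale n2 0 z)\<bar>)" by simp
    also have "\<dots> \<le> A0" unfolding A0_def add_norm_def by (rule SUP_upper) (use b in simp)
    finally show ?thesis .
  qed
  have c0: "c \<ge> 0" by (simp add: c_def)
  show ?thesis
    unfolding add_norm_def[of \<kappa> "\<lambda>z. rescale n1 \<tau> z - rescale n2 \<tau> z"] A0_def[symmetric] c_def[symmetric]
  proof (rule SUP_least)
    fix \<eta> :: real assume "\<eta> \<in> {0<..}"
    hence e: "\<eta> > 0" by simp
    define \<xi> where "\<xi> = \<eta> * exp (-\<tau>)"
    have \<xi>: "\<xi> > 0" using e by (simp add: \<xi>_def)
    have t2: "\<tau> / 2 \<ge> 0" using \<tau> by simp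
    obtain b where b: "\<xi> \<le> b" "b \<le> \<xi> * exp (\<tau>/2)"
      and bD: "\<bar>FL n1 (\<tau>/2) \<xi> - FL n2 (\<tau>/2) \<xi>\<bar> \<le> \<bar>D0 b\<bar>"
      using compare[OF s1 s2 t2 \<xi>] by (auto simp: D0_def)
    have bp: "b > 0" using b \<xi> by simp
    have bb: "b \<le> \<eta> * exp (-(\<tau>/2))"
    proof -
      have ee: "exp (-\<tau>) * exp (\<tau>/2) = exp (-(\<tau>/2))" by (simp flip: exp_add)
      have "\<xi> * exp (\<tau>/2) = \<eta> * exp (-(\<tau>/2))" by (simp add: \<xi>_def mult.assoc ee)
      thus ?thesis using b by simp
    qed
    have fac: "\<eta> powr -\<kappa> * exp \<tau> * b powr \<kappa> \<le> c"
    proof -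
      have "b powr \<kappa> \<le> (\<eta> * exp (-(\<tau>/2))) powr \<kappa>"
        by (rule powr_mono2) (use \<kappa> bp bb in auto)
      also have "\<dots> = \<eta> powr \<kappa> * exp (-(\<tau>/2) * \<kappa>)" by (simp add: powr_mult exp_powr_real)
      finally have "\<eta> powr -\<kappa> * exp \<tau> * b powr \<kappa> \<le> \<eta> powr -\<kappa> * exp \<tau> * (\<eta> powr \<kappa> * exp (-(\<tau>/2) * \<kappa>))"
        by (rule mult_left_mono) simp
      also have "\<dots> = (\<eta> powr -\<kappa> * \<eta> powr \<kappa>) * (exp \<tau> * exp (-(\<tau>/2) * \<kappa>))" by (simp add: ac_simps)
      also have "\<eta> powr -\<kappa> * \<eta> powr \<kappa> = 1" using e by (simp add: powr_add[symmetric])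
      also have "exp \<tau> * exp (-(\<tau>/2) * \<kappa>) = c"
      proof -
        have "\<tau> + -(\<tau>/2) * \<kappa> = -(1/2) * (\<kappa> - 2) * \<tau>" by (simp add: field_simps)
        thus ?thesis by (simp add: c_def flip: exp_add)
      qed
      finally show ?thesis by simp
    qed
    have "\<eta> powr (-\<kappa>) * \<bar>LINT x:{0<..}|lborel. (1 - exp (-(\<eta> * x))) * (rescale n1 \<tau> x - rescale n2 \<tau> x)\<bar>
        = \<eta> powr -\<kappa> * exp \<tau> * \<bar>FL n1 (\<tau>/2) \<xi> - FL n2 (\<tau>/2) \<xi>\<bar>"
      using resc_int[OF s1 s2 \<tau> e] by (simp add: \<xi>_def abs_mult)
    also have "\<dots> \<le> \<eta> powr -\<kappa> * exp \<tau> * \<bar>D0 b\<bar>" by (rule mult_left_mono[OF bD]) simp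
    also have "\<dots> = (\<eta> powr -\<kappa> * exp \<tau> * b powr \<kappa>) * (b powr -\<kappa> * \<bar>D0 b\<bar>)"
    proof -
      have "b powr \<kappa> * b powr -\<kappa> = 1" using bp by (simp add: powr_add[symmetric])
      thus ?thesis by (metis (no_types, lifting) mult.assoc mult.commute mult_1)
    qed
    also have "\<dots> \<le> c * (b powr -\<kappa> * \<bar>D0 b\<bar>)" by (rule mult_right_mono[OF fac]) simp
    finally have le: "\<eta> powr (-\<kappa>) * \<bar>LINT x:{0<..}|lborel. (1 - exp (-(\<eta> * x))) * (rescale n1 \<tau> x - rescale n2 \<tau> x)\<bar>
        \<le> c * (b powr -\<kappa> * \<bar>D0 b\<bar>)" .
    have "ereal (\<eta> powr (-\<kappa>) * \<bar>LINT x:{0<..}|lborel. (1 - exp (-(\<eta> * x))) * (rescale n1 \<tau> x - rescale n2 \<tau> x)\<bar>)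
        \<le> ereal c * ereal (b powr -\<kappa> * \<bar>D0 b\<bar>)" using le by simp
    also have "\<dots> \<le> ereal c * A0" by (rule ereal_mult_left_mono[OF A0ge[OF bp]]) (use c0 in simp)
    finally show "ereal (\<eta> powr (-\<kappa>) * \<bar>LINT x:{0<..}|lborel. (1 - exp (-(\<eta> * x))) * (rescale n1 \<tau> x - rescale n2 \<tau> x)\<bar>)
        \<le> ereal c * A0" .
  qed
qed


end
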